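(* If $A\| B$ is a right D2 algebra extension, then the extension $\rho:A^{\mathrm{op}}\to\mathcal E=\mathrm{End}({}_BA)$ is left D2 and left balanced. Explicitly, if $\gamma_j\in S,u_j\in T$ is a right D2 quasibase for $A\| B$, then $T_j:=\sum_k\big(x\mapsto\gamma_j(xu_k^1)u_k^2\big)\otimes_{\rho(A)}\gamma_k\in(\mathcal E\otimes_{\rho(A)}\mathcal E)^{\rho(A)}$ and $\mathcal B_j\in\mathrm{End}({}_{\rho(A)}\mathcal E_{\rho(A)})$, $\mathcal B_j(f)=u_j^1f(u_j^2-)$, form a left D2 quasibase: $f\otimes_{\rho(A)}g=\sum_jT_j^1\otimes T_j^2\circ\mathcal B_j(f)\circ g$ for all $f,g\in\mathcal E$.
   Context: Algebras over a commutative ring $K$; an algebra extension $C\| D$ is a unit-preserving homomorphism $D\to C$. For $A\| B$: $S=\mathrm{End}({}_BA_B)$, $\mathcal E=\mathrm{End}({}_BA)$ (composition), $T=(A\otimes_BA)^B$ with Sweedler notation $t=t^1\otimes t^2$; $\rho(a)(x)=xa$, so $\rho:A^{\mathrm{op}}\to\mathcal E$ is an algebra homomorphism. $C\| D$ is right D2 if $C\otimes_DC$ is isomorphic as $C$-$D$-bimodule to a direct summand of some finite direct sum $C^n$, left D2 if the same holds as $D$-$C$-bimodules. Right D2 quasibase of $A\| B$: finitely many $\gamma_j\in S,u_j\in T$ with $a\otimes_Ba'=\sum_ja\gamma_j(a')u_j^1\otimes u_j^2$; left D2 quasibase of $C\| D$: finitely many $\beta_i\in\mathrm{End}({}_DC_D)$,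 $t_i\in(C\otimes_DC)^D$ with $c\otimes_Dc'=\sum_it_i^1\otimes t_i^2\beta_i(c)c'$. $C\| D$ is left balanced if every additive map $h:C\to C$ commuting with all elements of $\mathrm{End}({}_DC)$ is left multiplication by an element of the image of $D$. *)

theory Defs
  imports "HOL-Algebra.Ring"
begin

text \<open>Formal sums of simple tensors are lists of pairs; their image in the free
abelian group Z[C x C] is given by multiplicities.\<close>

definition dlt :: "'x \<Rightarrow> ('x \<Rightarrow> int)" where
  "dlt p = (\<lambda>q. if q = p then 1 else 0)"

definition fsum_of :: "'x list \<Rightarrow> ('x \<Rightarrow> int)" where
  "fsum_of xs = (\<lambda>p. int (count_list xs p))"

inductive_set trel :: "'c ring \<Rightarrow> 'd ring \<Rightarrow> ('d \<Rightarrow> 'c) \<Rightarrow> ('c \<times> 'c \<Rightarrow> int) set"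
  for C D phi where
  zero: "(\<lambda>_. 0) \<in> trel C D phi"
| addl: "\<lbrakk>x \<in> carrier C; x' \<in> carrier C; y \<in> carrier C\<rbrakk> \<Longrightarrow>
     dlt (x \<oplus>\<^bsub>C\<^esub> x', y) - dlt (x, y) - dlt (x', y) \<in> trel C D phi"
| addr: "\<lbrakk>x \<in> carrier C; y \<in> carrier C; y' \<in> carrier C\<rbrakk> \<Longrightarrow>
     dlt (x, y \<oplus>\<^bsub>C\<^esub> y') - dlt (x, y) - dlt (x, y') \<in> trel C D phi"
| bal: "\<lbrakk>x \<in> carrier C; d \<in> carrier D; y \<in> carrier C\<rbrakk> \<Longrightarrow>
     dlt (x \<otimes>\<^bsub>C\<^esub> phi d, y) - dlt (x, phi d \<otimes>\<^bsub>C\<^esub> y) \<in> trel C D phi"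
| diff: "\<lbrakk>f \<in> trel C D phi; g \<in> trel C D phi\<rbrakk> \<Longrightarrow> f - g \<in> trel C D phi"

definition teq :: "'c ring \<Rightarrow> 'd ring \<Rightarrow> ('d \<Rightarrow> 'c) \<Rightarrow> ('c \<times> 'c) list \<Rightarrow> ('c \<times> 'c) list \<Rightarrow> bool" where
  "teq C D phi xs ys \<longleftrightarrow> fsum_of xs - fsum_of ys \<in> trel C D phi"

definition fsums :: "'c ring \<Rightarrow> ('c \<times> 'c) list set" where
  "fsums C = {xs. set xs \<subseteq> carrier C \<times> carrier C}"

definition tcls :: "'c ring \<Rightarrow> 'd ring \<Rightarrow> ('d \<Rightarrow> 'c) \<Rightarrow> ('c \<times> 'c) list \<Rightarrow> ('c \<times> 'c) list set" where
  "tcls C D phi xs = {ys \<in> fsums C. teq C D phi xs ys}"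

definition tens :: "'c ring \<Rightarrow> 'd ring \<Rightarrow> ('d \<Rightarrow> 'c) \<Rightarrow> ('c \<times> 'c) list set set" where
  "tens C D phi = tcls C D phi ` fsums C"

definition tlift :: "'c ring \<Rightarrow> 'd ring \<Rightarrow> ('d \<Rightarrow> 'c) \<Rightarrow> (('c \<times> 'c) list \<Rightarrow> ('c \<times> 'c) list)
    \<Rightarrow> ('c \<times> 'c) list set \<Rightarrow> ('c \<times> 'c) list set" where
  "tlift C D phi F X = (\<Union>xs\<in>X. tcls C D phi (F xs))"

definition tadd :: "'c ring \<Rightarrow> 'd ring \<Rightarrow> ('d \<Rightarrow> 'c) \<Rightarrow>
    ('c \<times> 'c) list set \<Rightarrow> ('c \<times> 'c) list set \<Rightarrow> ('c \<times> 'c) list set" where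
  "tadd C D phi X Y = (\<Union>xs\<in>X. \<Union>ys\<in>Y. tcls C D phi (xs @ ys))"

definition lmul :: "'c ring \<Rightarrow> 'c \<Rightarrow> ('c \<times> 'c) list \<Rightarrow> ('c \<times> 'c) list" where
  "lmul C c xs = map (\<lambda>(x, y). (c \<otimes>\<^bsub>C\<^esub> x, y)) xs"

definition rmul :: "'c ring \<Rightarrow> 'c \<Rightarrow> ('c \<times> 'c) list \<Rightarrow> ('c \<times> 'c) list" where
  "rmul C c xs = map (\<lambda>(x, y). (x, y \<otimes>\<^bsub>C\<^esub> c)) xs"

definition cvec :: "'c ring \<Rightarrow> nat \<Rightarrow> (nat \<Rightarrow> 'c) set" where
  "cvec C n = {..<n} \<rightarrow>\<^sub>E carrier C"

definition vadd :: "'c ring \<Rightarrow> nat \<Rightarrow> (nat \<Rightarrow> 'c) \<Rightarrow> (nat \<Rightarrow> 'c) \<Rightarrow> (nat \<Rightarrow> 'c)" where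
  "vadd C n v w = (\<lambda>i\<in>{..<n}. v i \<oplus>\<^bsub>C\<^esub> w i)"

definition vlmul :: "'c ring \<Rightarrow> nat \<Rightarrow> 'c \<Rightarrow> (nat \<Rightarrow> 'c) \<Rightarrow> (nat \<Rightarrow> 'c)" where
  "vlmul C n c v = (\<lambda>i\<in>{..<n}. c \<otimes>\<^bsub>C\<^esub> v i)"

definition vrmul :: "'c ring \<Rightarrow> nat \<Rightarrow> 'c \<Rightarrow> (nat \<Rightarrow> 'c) \<Rightarrow> (nat \<Rightarrow> 'c)" where
  "vrmul C n c v = (\<lambda>i\<in>{..<n}. v i \<otimes>\<^bsub>C\<^esub> c)"

text \<open>Right D2: C \<otimes>_D C is, as C-D-bimodule, isomorphic to a direct summand of C^n,
i.e. it is a C-D-bimodule retract of C^n (split mono iota, retraction pi).\<close>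
definition right_D2 :: "'c ring \<Rightarrow> 'd ring \<Rightarrow> ('d \<Rightarrow> 'c) \<Rightarrow> bool" where
  "right_D2 C D phi \<longleftrightarrow> (\<exists>n iota pi.
     iota \<in> tens C D phi \<rightarrow> cvec C n \<and> pi \<in> cvec C n \<rightarrow> tens C D phi \<and>
     (\<forall>X\<in>tens C D phi. \<forall>Y\<in>tens C D phi. iota (tadd C D phi X Y) = vadd C n (iota X) (iota Y)) \<and>
     (\<forall>X\<in>tens C D phi. \<forall>c\<in>carrier C. iota (tlift C D phi (lmul C c) X) = vlmul C n c (iota X)) \<and>
     (\<forall>X\<in>tens C D phi. \<forall>d\<in>carrier D. iota (tlift C D phi (rmul C (phi d)) X) = vrmul C n (phi d) (iota X)) \<and>
     (\<forall>v\<in>cvec C n. \<forall>w\<in>cvec C n. pi (vadd C n v w) = tadd C D phi (pi v) (pi w)) \<and>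
     (\<forall>v\<in>cvec C n. \<forall>c\<in>carrier C. pi (vlmul C n c v) = tlift C D phi (lmul C c) (pi v)) \<and>
     (\<forall>v\<in>cvec C n. \<forall>d\<in>carrier D. pi (vrmul C n (phi d) v) = tlift C D phi (rmul C (phi d)) (pi v)) \<and>
     (\<forall>X\<in>tens C D phi. pi (iota X) = X))"

definition left_D2 :: "'c ring \<Rightarrow> 'd ring \<Rightarrow> ('d \<Rightarrow> 'c) \<Rightarrow> bool" where
  "left_D2 C D phi \<longleftrightarrow> (\<exists>n iota pi.
     iota \<in> tens C D phi \<rightarrow> cvec C n \<and> pi \<in> cvec C n \<rightarrow> tens C D phi \<and>
     (\<forall>X\<in>tens C D phi. \<forall>Y\<in>tens C D phi. iota (tadd C D phi X Y) = vadd C n (iota X) (iota Y)) \<and>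
     (\<forall>X\<in>tens C D phi. \<forall>d\<in>carrier D. iota (tlift C D phi (lmul C (phi d)) X) = vlmul C n (phi d) (iota X)) \<and>
     (\<forall>X\<in>tens C D phi. \<forall>c\<in>carrier C. iota (tlift C D phi (rmul C c) X) = vrmul C n c (iota X)) \<and>
     (\<forall>v\<in>cvec C n. \<forall>w\<in>cvec C n. pi (vadd C n v w) = tadd C D phi (pi v) (pi w)) \<and>
     (\<forall>v\<in>cvec C n. \<forall>d\<in>carrier D. pi (vlmul C n (phi d) v) = tlift C D phi (lmul C (phi d)) (pi v)) \<and>
     (\<forall>v\<in>cvec C n. \<forall>c\<in>carrier C. pi (vrmul C n c v) = tlift C D phi (rmul C c) (pi v)) \<and>
     (\<forall>X\<in>tens C D phi. pi (iota X) = X))"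

definition additive_on :: "'c ring \<Rightarrow> ('c \<Rightarrow> 'c) \<Rightarrow> bool" where
  "additive_on C f \<longleftrightarrow> (\<forall>x\<in>carrier C. \<forall>y\<in>carrier C. f (x \<oplus>\<^bsub>C\<^esub> y) = f x \<oplus>\<^bsub>C\<^esub> f y)"

definition lend :: "'c ring \<Rightarrow> 'd ring \<Rightarrow> ('d \<Rightarrow> 'c) \<Rightarrow> ('c \<Rightarrow> 'c) set" where
  "lend C D phi = {f. f \<in> carrier C \<rightarrow> carrier C \<and> additive_on C f \<and>
     (\<forall>d\<in>carrier D. \<forall>x\<in>carrier C. f (phi d \<otimes>\<^bsub>C\<^esub> x) = phi d \<otimes>\<^bsub>C\<^esub> f x)}"

definition bend :: "'c ring \<Rightarrow> 'd ring \<Rightarrow> ('d \<Rightarrow> 'c) \<Rightarrow> ('c \<Rightarrow> 'c) set" where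
  "bend C D phi = {f \<in> lend C D phi.
     \<forall>d\<in>carrier D. \<forall>x\<in>carrier C. f (x \<otimes>\<^bsub>C\<^esub> phi d) = f x \<otimes>\<^bsub>C\<^esub> phi d}"

definition tcent :: "'c ring \<Rightarrow> 'd ring \<Rightarrow> ('d \<Rightarrow> 'c) \<Rightarrow> ('c \<times> 'c) list set" where
  "tcent C D phi = {xs \<in> fsums C. \<forall>d\<in>carrier D.
     teq C D phi (lmul C (phi d) xs) (rmul C (phi d) xs)}"

text \<open>Right D2 quasibase gamma_j, u_j (j < m); u_j is given by a representing formal sum
(Sweedler notation u_j = u_j^1 \<otimes> u_j^2).\<close>
definition right_D2_qb :: "'c ring \<Rightarrow> 'd ring \<Rightarrow> ('d \<Rightarrow> 'c) \<Rightarrow> nat \<Rightarrow> (nat \<Rightarrow> 'c \<Rightarrow> 'c)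
    \<Rightarrow> (nat \<Rightarrow> ('c \<times> 'c) list) \<Rightarrow> bool" where
  "right_D2_qb C D phi m gamma u \<longleftrightarrow>
     (\<forall>j<m. gamma j \<in> bend C D phi \<and> u j \<in> tcent C D phi) \<and>
     (\<forall>a\<in>carrier C. \<forall>a'\<in>carrier C. teq C D phi [(a, a')]
        (concat (map (\<lambda>j. map (\<lambda>(p, q). (a \<otimes>\<^bsub>C\<^esub> gamma j a' \<otimes>\<^bsub>C\<^esub> p, q)) (u j)) [0..<m])))"

definition left_D2_qb :: "'c ring \<Rightarrow> 'd ring \<Rightarrow> ('d \<Rightarrow> 'c) \<Rightarrow> nat \<Rightarrow> (nat \<Rightarrow> 'c \<Rightarrow> 'c)
    \<Rightarrow> (nat \<Rightarrow> ('c \<times> 'c) list) \<Rightarrow> bool" where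
  "left_D2_qb C D phi m beta t \<longleftrightarrow>
     (\<forall>i<m. beta i \<in> bend C D phi \<and> t i \<in> tcent C D phi) \<and>
     (\<forall>c\<in>carrier C. \<forall>c'\<in>carrier C. teq C D phi [(c, c')]
        (concat (map (\<lambda>i. map (\<lambda>(p, q). (p, q \<otimes>\<^bsub>C\<^esub> beta i c \<otimes>\<^bsub>C\<^esub> c')) (t i)) [0..<m])))"

definition left_balanced :: "'c ring \<Rightarrow> 'd ring \<Rightarrow> ('d \<Rightarrow> 'c) \<Rightarrow> bool" where
  "left_balanced C D phi \<longleftrightarrow> (\<forall>h. h \<in> carrier C \<rightarrow> carrier C \<and> additive_on C h \<and>
       (\<forall>f\<in>lend C D phi. \<forall>x\<in>carrier C. h (f x) = f (h x)) \<longrightarrow>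
       (\<exists>d\<in>carrier D. \<forall>x\<in>carrier C. h x = phi d \<otimes>\<^bsub>C\<^esub> x))"

definition op_ring :: "'a ring \<Rightarrow> 'a ring" where
  "op_ring A = \<lparr>carrier = carrier A, mult = (\<lambda>x y. y \<otimes>\<^bsub>A\<^esub> x), one = \<one>\<^bsub>A\<^esub>,
     zero = \<zero>\<^bsub>A\<^esub>, add = (\<oplus>\<^bsub>A\<^esub>)\<rparr>"

text \<open>E = End(_B A) with composition; functions are taken extensional on carrier A.\<close>
definition End_ring :: "'a ring \<Rightarrow> 'b ring \<Rightarrow> ('b \<Rightarrow> 'a) \<Rightarrow> ('a \<Rightarrow> 'a) ring" where
  "End_ring A B phi = \<lparr>carrier = lend A B phi \<inter> extensional (carrier A),
     mult = (\<lambda>f g. restrict (f \<circ> g) (carrier A)), one = restrict id (carrier A),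
     zero = restrict (\<lambda>_. \<zero>\<^bsub>A\<^esub>) (carrier A),
     add = (\<lambda>f g. restrict (\<lambda>x. f x \<oplus>\<^bsub>A\<^esub> g x) (carrier A))\<rparr>"

definition rho :: "'a ring \<Rightarrow> 'a \<Rightarrow> ('a \<Rightarrow> 'a)" where
  "rho A a = restrict (\<lambda>x. x \<otimes>\<^bsub>A\<^esub> a) (carrier A)"

definition lsum :: "'a ring \<Rightarrow> 'a list \<Rightarrow> 'a" where
  "lsum A xs = foldr (\<lambda>x acc. x \<oplus>\<^bsub>A\<^esub> acc) xs \<zero>\<^bsub>A\<^esub>"

definition qbT :: "'a ring \<Rightarrow> nat \<Rightarrow> (nat \<Rightarrow> 'a \<Rightarrow> 'a) \<Rightarrow> (nat \<Rightarrow> ('a \<times> 'a) list)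
    \<Rightarrow> nat \<Rightarrow> (('a \<Rightarrow> 'a) \<times> ('a \<Rightarrow> 'a)) list" where
  "qbT A m gamma u j = concat (map (\<lambda>k. map (\<lambda>(p, q).
      (restrict (\<lambda>x. gamma j (x \<otimes>\<^bsub>A\<^esub> p) \<otimes>\<^bsub>A\<^esub> q) (carrier A),
       restrict (gamma k) (carrier A))) (u k)) [0..<m])"

definition qbB :: "'a ring \<Rightarrow> 'b ring \<Rightarrow> ('b \<Rightarrow> 'a) \<Rightarrow> (nat \<Rightarrow> ('a \<times> 'a) list)
    \<Rightarrow> nat \<Rightarrow> ('a \<Rightarrow> 'a) \<Rightarrow> ('a \<Rightarrow> 'a)" where
  "qbB A B phi u j = restrict (\<lambda>f. restrict (\<lambda>x.
      lsum A (map (\<lambda>(p, q). p \<otimes>\<^bsub>A\<^esub> f (q \<otimes>\<^bsub>A\<^esub> x)) (u j))) (carrier A))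
     (carrier (End_ring A B phi))"

end

theory Submission
  imports Defs "HOL-Library.Multiset" "HOL-Library.Function_Algebras"
begin

section \<open>Basic facts on formal sums\<close>

lemma fsum_of_Nil[simp]: "fsum_of [] = 0"
  by (simp add: fsum_of_def fun_eq_iff)

lemma fsum_of_Cons[simp]: "fsum_of (x # xs) = dlt x + fsum_of xs"
  by (simp add: fsum_of_def dlt_def fun_eq_iff)

lemma fsum_of_append[simp]: "fsum_of (xs @ ys) = fsum_of xs + fsum_of ys"
  by (simp add: fsum_of_def fun_eq_iff)

lemma fsum_of_eq_iff: "fsum_of xs = fsum_of ys \<longleftrightarrow> mset xs = mset ys"
  by (simp add: fsum_of_def fun_eq_iff multiset_eq_iff count_mset)

lemma trel_zero': "0 \<in> trel C D phi"
  using trel.zero[of C D phi] by (simp add: zero_fun_def)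

lemma trel_uminus: "f \<in> trel C D phi \<Longrightarrow> - f \<in> trel C D phi"
  using trel.diff[OF trel_zero', of f] by simp

lemma trel_add: "f \<in> trel C D phi \<Longrightarrow> g \<in> trel C D phi \<Longrightarrow> f + g \<in> trel C D phi"
  by (metis diff_minus_eq_add trel.diff trel_uminus)

lemma teq_refl: "teq C D phi xs xs"
  by (simp add: teq_def trel_zero')

lemma teq_sym: "teq C D phi xs ys \<Longrightarrow> teq C D phi ys xs"
  unfolding teq_def using trel_uminus by fastforce

lemma teq_trans: "teq C D phi xs ys \<Longrightarrow> teq C D phi ys zs \<Longrightarrow> teq C D phi xs zs"
  unfolding teq_def using trel_add by fastforce

lemma teq_append: "teq C D phi xs ys \<Longrightarrow> teq C D phi xs' ys' \<Longrightarrow> teq C D phi (xs @ xs') (ys @ ys')"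
  unfolding teq_def using trel_add by (fastforce simp: algebra_simps)

lemma teq_mset: "mset xs = mset ys \<Longrightarrow> teq C D phi xs ys"
  unfolding teq_def using fsum_of_eq_iff[of xs ys] by (simp add: trel_zero')

lemma teq_cancel: "teq C D phi (xs @ zs) (ys @ zs) \<Longrightarrow> teq C D phi xs ys"
  unfolding teq_def by simp

lemma teq_Nil_iff: "teq C D phi xs [] \<longleftrightarrow> fsum_of xs \<in> trel C D phi"
  unfolding teq_def by simp

lemma teq_concat:
  assumes "\<And>i. i \<in> set is \<Longrightarrow> teq C D phi (f i) (g i)"
  shows "teq C D phi (concat (map f is)) (concat (map g is))"
  using assms by (induction "is") (auto intro: teq_append teq_refl)

lemma fsums_append[simp]: "xs @ ys \<in> fsums C \<longleftrightarrow> xs \<in> fsums C \<and> ys \<in> fsums C"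
  by (auto simp: fsums_def)

lemma fsums_Cons[simp]: "x # ys \<in> fsums C \<longleftrightarrow> x \<in> carrier C \<times> carrier C \<and> ys \<in> fsums C"
  by (auto simp: fsums_def)

lemma fsums_Nil[simp]: "[] \<in> fsums C"
  by (auto simp: fsums_def)

lemma fsums_concat[simp]: "concat xss \<in> fsums C \<longleftrightarrow> (\<forall>xs\<in>set xss. xs \<in> fsums C)"
  by (auto simp: fsums_def)

lemma fsums_map: "(\<And>p. p \<in> set xs \<Longrightarrow> f p \<in> carrier C \<times> carrier C) \<Longrightarrow> map f xs \<in> fsums C"
proof -
  assume "\<And>p. p \<in> set xs \<Longrightarrow> f p \<in> carrier C \<times> carrier C"
  then have "f ` set xs \<subseteq> carrier C \<times> carrier C" by blast
  then show ?thesis unfolding fsums_def by simp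
qed

locale tctx =
  fixes C :: "'c ring" and D :: "'d ring" and phi :: "'d \<Rightarrow> 'c"
  assumes C: "ring C" and phi: "phi \<in> carrier D \<rightarrow> carrier C"
begin

interpretation C: ring C by (rule C)

lemma phi_closed[simp]: "d \<in> carrier D \<Longrightarrow> phi d \<in> carrier C"
  using phi by auto

abbreviation "TEQ \<equiv> teq C D phi"

lemma teq_addl: "\<lbrakk>x \<in> carrier C; x' \<in> carrier C; y \<in> carrier C\<rbrakk> \<Longrightarrow>
   TEQ [(x \<oplus>\<^bsub>C\<^esub> x', y)] [(x, y), (x', y)]"
  unfolding teq_def using trel.addl[of x C x' y D phi] by (simp add: algebra_simps)

lemma teq_addr: "\<lbrakk>x \<in> carrier C; y \<in> carrier C; y' \<in> carrier C\<rbrakk> \<Longrightarrow>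
   TEQ [(x, y \<oplus>\<^bsub>C\<^esub> y')] [(x, y), (x, y')]"
  unfolding teq_def using trel.addr[of x C y y' D phi] by (simp add: algebra_simps)

lemma teq_bal: "\<lbrakk>x \<in> carrier C; d \<in> carrier D; y \<in> carrier C\<rbrakk> \<Longrightarrow>
   TEQ [(x \<otimes>\<^bsub>C\<^esub> phi d, y)] [(x, phi d \<otimes>\<^bsub>C\<^esub> y)]"
  unfolding teq_def using trel.bal[of x C d D y phi] by (simp add: algebra_simps)

lemma teq_zero_r: "x \<in> carrier C \<Longrightarrow> TEQ [(x, \<zero>\<^bsub>C\<^esub>)] []"
proof -
  assume x: "x \<in> carrier C"
  have "TEQ [(x, \<zero>\<^bsub>C\<^esub>)] [(x, \<zero>\<^bsub>C\<^esub>), (x, \<zero>\<^bsub>C\<^esub>)]"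
    using teq_addr[of x "\<zero>\<^bsub>C\<^esub>" "\<zero>\<^bsub>C\<^esub>"] x by simp
  then show ?thesis
    using teq_cancel[of C D phi "[]" "[(x, \<zero>\<^bsub>C\<^esub>)]" "[(x, \<zero>\<^bsub>C\<^esub>)]"]
    by (auto intro: teq_sym)
qed

lemma teq_zero_l: "y \<in> carrier C \<Longrightarrow> TEQ [(\<zero>\<^bsub>C\<^esub>, y)] []"
proof -
  assume y: "y \<in> carrier C"
  have "TEQ [(\<zero>\<^bsub>C\<^esub>, y)] [(\<zero>\<^bsub>C\<^esub>, y), (\<zero>\<^bsub>C\<^esub>, y)]"
    using teq_addl[of "\<zero>\<^bsub>C\<^esub>" "\<zero>\<^bsub>C\<^esub>" y] y by simp
  then show ?thesis
    using teq_cancel[of C D phi "[]" "[(\<zero>\<^bsub>C\<^esub>, y)]" "[(\<zero>\<^bsub>C\<^esub>, y)]"]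
    by (auto intro: teq_sym)
qed

lemma teq_induct_aux:
  assumes Q_mset: "\<And>xs ys. xs \<in> fsums C \<Longrightarrow> ys \<in> fsums C \<Longrightarrow> mset xs = mset ys \<Longrightarrow> Q xs ys"
    and Q_sym: "\<And>xs ys. Q xs ys \<Longrightarrow> Q ys xs"
    and Q_app: "\<And>xs ys xs' ys'. Q xs ys \<Longrightarrow> Q xs' ys' \<Longrightarrow> Q (xs @ xs') (ys @ ys')"
    and Q_addl: "\<And>x x' y. \<lbrakk>x \<in> carrier C; x' \<in> carrier C; y \<in> carrier C\<rbrakk> \<Longrightarrow>
        Q [(x \<oplus>\<^bsub>C\<^esub> x', y)] [(x, y), (x', y)]"
    and Q_addr: "\<And>x y y'. \<lbrakk>x \<in> carrier C; y \<in> carrier C; y' \<in> carrier C\<rbrakk> \<Longrightarrow>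
        Q [(x, y \<oplus>\<^bsub>C\<^esub> y')] [(x, y), (x, y')]"
    and Q_bal: "\<And>x d y. \<lbrakk>x \<in> carrier C; d \<in> carrier D; y \<in> carrier C\<rbrakk> \<Longrightarrow>
        Q [(x \<otimes>\<^bsub>C\<^esub> phi d, y)] [(x, phi d \<otimes>\<^bsub>C\<^esub> y)]"
  shows "f \<in> trel C D phi \<Longrightarrow> \<exists>xs ys. xs \<in> fsums C \<and> ys \<in> fsums C \<and>
            f = fsum_of xs - fsum_of ys \<and> Q xs ys"
proof (induction f rule: trel.induct)
  case zero
  then show ?case by (intro exI[of _ "[]"]) (auto simp: zero_fun_def[symmetric] intro: Q_mset)
next
  case (addl x x' y)
  then show ?case
    by (intro exI[of _ "[(x \<oplus>\<^bsub>C\<^esub> x', y)]"] exI[of _ "[(x, y), (x', y)]"])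
       (auto intro: Q_addl simp: algebra_simps)
next
  case (addr x y y')
  then show ?case
    by (intro exI[of _ "[(x, y \<oplus>\<^bsub>C\<^esub> y')]"] exI[of _ "[(x, y), (x, y')]"])
       (auto intro: Q_addr simp: algebra_simps)
next
  case (bal x d y)
  then show ?case
    by (intro exI[of _ "[(x \<otimes>\<^bsub>C\<^esub> phi d, y)]"] exI[of _ "[(x, phi d \<otimes>\<^bsub>C\<^esub> y)]"])
       (auto intro: Q_bal simp: algebra_simps)
next
  case (diff f g)
  then obtain a b ga gb where h: "a \<in> fsums C" "b \<in> fsums C" "f = fsum_of a - fsum_of b" "Q a b"
     "ga \<in> fsums C" "gb \<in> fsums C" "g = fsum_of ga - fsum_of gb" "Q ga gb" by blast
  have "f - g = fsum_of (a @ gb) - fsum_of (b @ ga)" unfolding h(3,7) by (simp add: algebra_simps)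
  moreover have "Q (a @ gb) (b @ ga)" using Q_app[OF h(4) Q_sym[OF h(8)]] .
  ultimately show ?case using h by (intro exI[of _ "a @ gb"] exI[of _ "b @ ga"]) auto
qed

lemma teq_induct:
  assumes Q_mset: "\<And>xs ys. xs \<in> fsums C \<Longrightarrow> ys \<in> fsums C \<Longrightarrow> mset xs = mset ys \<Longrightarrow> Q xs ys"
    and Q_sym: "\<And>xs ys. Q xs ys \<Longrightarrow> Q ys xs"
    and Q_trans: "\<And>xs ys zs. Q xs ys \<Longrightarrow> Q ys zs \<Longrightarrow> Q xs zs"
    and Q_app: "\<And>xs ys xs' ys'. Q xs ys \<Longrightarrow> Q xs' ys' \<Longrightarrow> Q (xs @ xs') (ys @ ys')"
    and Q_cancel: "\<And>xs ys zs. xs \<in> fsums C \<Longrightarrow> ys \<in> fsums C \<Longrightarrow> zs \<in> fsums C \<Longrightarrow>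
        Q (xs @ zs) (ys @ zs) \<Longrightarrow> Q xs ys"
    and Q_addl: "\<And>x x' y. \<lbrakk>x \<in> carrier C; x' \<in> carrier C; y \<in> carrier C\<rbrakk> \<Longrightarrow>
        Q [(x \<oplus>\<^bsub>C\<^esub> x', y)] [(x, y), (x', y)]"
    and Q_addr: "\<And>x y y'. \<lbrakk>x \<in> carrier C; y \<in> carrier C; y' \<in> carrier C\<rbrakk> \<Longrightarrow>
        Q [(x, y \<oplus>\<^bsub>C\<^esub> y')] [(x, y), (x, y')]"
    and Q_bal: "\<And>x d y. \<lbrakk>x \<in> carrier C; d \<in> carrier D; y \<in> carrier C\<rbrakk> \<Longrightarrow>
        Q [(x \<otimes>\<^bsub>C\<^esub> phi d, y)] [(x, phi d \<otimes>\<^bsub>C\<^esub> y)]"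
    and T: "TEQ xs ys" and xs: "xs \<in> fsums C" and ys: "ys \<in> fsums C"
  shows "Q xs ys"
proof -
  from T have "fsum_of xs - fsum_of ys \<in> trel C D phi" by (simp add: teq_def)
  from teq_induct_aux[OF Q_mset Q_sym Q_app Q_addl Q_addr Q_bal this]
  obtain a b where h: "a \<in> fsums C" "b \<in> fsums C" "fsum_of xs - fsum_of ys = fsum_of a - fsum_of b" "Q a b"
    by blast
  have "fsum_of (xs @ b) = fsum_of (ys @ a)" using h(3) by (simp add: algebra_simps)
  then have "mset (xs @ b) = mset (ys @ a)" by (simp only: fsum_of_eq_iff)
  then have "Q (xs @ b) (ys @ a)" using h xs ys by (intro Q_mset) auto
  moreover have "Q (ys @ a) (ys @ b)" using Q_app[OF Q_mset[OF ys ys refl] h(4)] .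
  ultimately have "Q (xs @ b) (ys @ b)" by (rule Q_trans)
  then show ?thesis using Q_cancel xs ys h by blast
qed

end


declare teq_trans[trans]

section \<open>List sums\<close>

locale lring = fixes R :: "'a ring" assumes ring: "ring R"
sublocale lring \<subseteq> ring R by (rule ring)

context lring
begin

lemma lsum_Nil[simp]: "lsum R [] = \<zero>\<^bsub>R\<^esub>"
  by (simp add: lsum_def)

lemma lsum_Cons[simp]: "lsum R (x # xs) = x \<oplus>\<^bsub>R\<^esub> lsum R xs"
  by (simp add: lsum_def)

lemma lsum_closed[intro, simp]: "set xs \<subseteq> carrier R \<Longrightarrow> lsum R xs \<in> carrier R"
  by (induction xs) auto

lemma lsum_map_closed[intro, simp]: "(\<And>x. x \<in> set xs \<Longrightarrow> f x \<in> carrier R) \<Longrightarrow> lsum R (map f xs) \<in> carrier R"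
  by (induction xs) auto

lemma lsum_append: "set xs \<subseteq> carrier R \<Longrightarrow> set ys \<subseteq> carrier R \<Longrightarrow>
    lsum R (xs @ ys) = lsum R xs \<oplus>\<^bsub>R\<^esub> lsum R ys"
  by (induction xs) (auto simp: a_assoc)

lemma lsum_mset: "mset xs = mset ys \<Longrightarrow> set xs \<subseteq> carrier R \<Longrightarrow> lsum R xs = lsum R ys"
proof (induction xs arbitrary: ys)
  case Nil
  then show ?case by simp
next
  case (Cons x xs)
  then have "x \<in> set ys" by (metis list.set_intros(1) set_mset_mset)
  then obtain ys1 ys2 where ys: "ys = ys1 @ x # ys2" by (meson split_list)
  have m: "mset xs = mset (ys1 @ ys2)" using Cons.prems(1) ys by simp
  have sys: "set ys \<subseteq> carrier R" using Cons.prems by (metis set_mset_mset)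
  then have s1: "set ys1 \<subseteq> carrier R" "set ys2 \<subseteq> carrier R" "x \<in> carrier R" using ys by auto
  have "lsum R xs = lsum R (ys1 @ ys2)" using Cons m by auto
  then show ?case using s1 ys by (simp add: lsum_append a_lcomm)
qed

lemma lsum_map_add: "(\<And>x. x \<in> set xs \<Longrightarrow> f x \<in> carrier R) \<Longrightarrow> (\<And>x. x \<in> set xs \<Longrightarrow> g x \<in> carrier R) \<Longrightarrow>
   lsum R (map (\<lambda>x. f x \<oplus>\<^bsub>R\<^esub> g x) xs) = lsum R (map f xs) \<oplus>\<^bsub>R\<^esub> lsum R (map g xs)"
proof (induction xs)
  case Nil
  then show ?case by simp
next
  case (Cons a xs)
  have c: "lsum R (map f xs) \<in> carrier R" "lsum R (map g xs) \<in> carrier R" using Cons.prems by auto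
  show ?case using Cons c by (simp add: a_ac)
qed

lemma lsum_map_zero[simp]: "lsum R (map (\<lambda>x. \<zero>\<^bsub>R\<^esub>) xs) = \<zero>\<^bsub>R\<^esub>"
  by (induction xs) auto

lemma lsum_concat: "(\<And>xs. xs \<in> set xss \<Longrightarrow> set xs \<subseteq> carrier R) \<Longrightarrow>
    lsum R (concat xss) = lsum R (map (lsum R) xss)"
proof (induction xss)
  case (Cons a xss)
  have "set (concat xss) \<subseteq> carrier R" using Cons.prems by auto
  then show ?case using Cons by (simp add: lsum_append)
qed simp

lemma lsum_mult_left: "c \<in> carrier R \<Longrightarrow> (\<And>x. x \<in> set xs \<Longrightarrow> f x \<in> carrier R) \<Longrightarrow>
    c \<otimes>\<^bsub>R\<^esub> lsum R (map f xs) = lsum R (map (\<lambda>x. c \<otimes>\<^bsub>R\<^esub> f x) xs)"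
  by (induction xs) (simp_all add: r_distr)

lemma lsum_mult_right: "c \<in> carrier R \<Longrightarrow> (\<And>x. x \<in> set xs \<Longrightarrow> f x \<in> carrier R) \<Longrightarrow>
    lsum R (map f xs) \<otimes>\<^bsub>R\<^esub> c = lsum R (map (\<lambda>x. f x \<otimes>\<^bsub>R\<^esub> c) xs)"
  by (induction xs) (simp_all add: l_distr)

lemma lsum_swap: "(\<And>a b. a \<in> set xs \<Longrightarrow> b \<in> set ys \<Longrightarrow> h a b \<in> carrier R) \<Longrightarrow>
    lsum R (map (\<lambda>a. lsum R (map (h a) ys)) xs) = lsum R (map (\<lambda>b. lsum R (map (\<lambda>a. h a b) xs)) ys)"
proof (induction xs)
  case Nil
  then show ?case by simp
next
  case (Cons a xs)
  have "lsum R (map (\<lambda>b. lsum R (map (\<lambda>a. h a b) (a # xs))) ys)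
      = lsum R (map (\<lambda>b. h a b \<oplus>\<^bsub>R\<^esub> lsum R (map (\<lambda>a. h a b) xs)) ys)" by simp
  also have "\<dots> = lsum R (map (h a) ys) \<oplus>\<^bsub>R\<^esub> lsum R (map (\<lambda>b. lsum R (map (\<lambda>a. h a b) xs)) ys)"
    using Cons.prems by (intro lsum_map_add) auto
  finally show ?case using Cons by simp
qed

lemma additive_zero: "f \<in> carrier R \<rightarrow> carrier R \<Longrightarrow> additive_on R f \<Longrightarrow> f \<zero>\<^bsub>R\<^esub> = \<zero>\<^bsub>R\<^esub>"
proof -
  assume f: "f \<in> carrier R \<rightarrow> carrier R" and a: "additive_on R f"
  have "f \<zero>\<^bsub>R\<^esub> = f \<zero>\<^bsub>R\<^esub> \<oplus>\<^bsub>R\<^esub> f \<zero>\<^bsub>R\<^esub>" using a unfolding additive_on_def by (metis zero_closed r_zero)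
  then show ?thesis using f by (metis Pi_iff add.l_cancel_one' zero_closed)
qed

lemma additive_lsum: "f \<in> carrier R \<rightarrow> carrier R \<Longrightarrow> additive_on R f \<Longrightarrow>
    (\<And>x. x \<in> set xs \<Longrightarrow> g x \<in> carrier R) \<Longrightarrow>
    f (lsum R (map g xs)) = lsum R (map (\<lambda>x. f (g x)) xs)"
proof (induction xs)
  case Nil
  then show ?case using additive_zero by simp
next
  case (Cons a xs)
  then show ?case unfolding additive_on_def by (simp add: Pi_iff)
qed

end

section \<open>Tensor classes\<close>

lemma mem_tcls: "ys \<in> tcls C D phi xs \<longleftrightarrow> ys \<in> fsums C \<and> teq C D phi xs ys"
  by (simp add: tcls_def)

lemma tcls_self: "xs \<in> fsums C \<Longrightarrow> xs \<in> tcls C D phi xs"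
  by (simp add: tcls_def teq_refl)

lemma tcls_eq: "teq C D phi xs ys \<Longrightarrow> tcls C D phi xs = tcls C D phi ys"
proof -
  assume T: "teq C D phi xs ys"
  have "teq C D phi xs zs = teq C D phi ys zs" for zs
  proof
    assume "teq C D phi xs zs" then show "teq C D phi ys zs" by (rule teq_trans[OF teq_sym[OF T]])
  next
    assume "teq C D phi ys zs" then show "teq C D phi xs zs" by (rule teq_trans[OF T])
  qed
  then show ?thesis unfolding tcls_def by simp
qed

lemma tcls_eq_iff: "xs \<in> fsums C \<Longrightarrow> tcls C D phi xs = tcls C D phi ys \<longleftrightarrow> teq C D phi xs ys"
proof
  assume xs: "xs \<in> fsums C" and e: "tcls C D phi xs = tcls C D phi ys"
  have "xs \<in> tcls C D phi ys" using tcls_self[OF xs, of D phi] e by simp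
  then show "teq C D phi xs ys" by (simp add: mem_tcls teq_sym)
qed (rule tcls_eq)

lemma tens_cases: "X \<in> tens C D phi \<Longrightarrow> (\<And>xs. xs \<in> fsums C \<Longrightarrow> X = tcls C D phi xs \<Longrightarrow> P) \<Longrightarrow> P"
  unfolding tens_def by (erule imageE) simp

lemma tcls_in_tens: "xs \<in> fsums C \<Longrightarrow> tcls C D phi xs \<in> tens C D phi"
  unfolding tens_def by (rule imageI)

lemma some_tcls: "xs \<in> fsums C \<Longrightarrow> (SOME ys. ys \<in> tcls C D phi xs) \<in> tcls C D phi xs"
  by (rule someI, erule tcls_self)

lemma tadd_tcls: "xs \<in> fsums C \<Longrightarrow> ys \<in> fsums C \<Longrightarrow>
   tadd C D phi (tcls C D phi xs) (tcls C D phi ys) = tcls C D phi (xs @ ys)"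
proof -
  assume xs: "xs \<in> fsums C" and ys: "ys \<in> fsums C"
  have eq: "tcls C D phi (xs' @ ys') = tcls C D phi (xs @ ys)"
    if a: "xs' \<in> tcls C D phi xs" and b: "ys' \<in> tcls C D phi ys" for xs' ys'
  proof -
    from a b have "teq C D phi xs xs'" "teq C D phi ys ys'" by (simp_all add: mem_tcls)
    then have "teq C D phi (xs @ ys) (xs' @ ys')" by (rule teq_append)
    then show ?thesis by (rule tcls_eq[symmetric])
  qed
  have ne: "tcls C D phi xs \<noteq> {}" "tcls C D phi ys \<noteq> {}"
    using tcls_self[OF xs, of D phi] tcls_self[OF ys, of D phi] by auto
  have "tadd C D phi (tcls C D phi xs) (tcls C D phi ys)
      = (\<Union>xs'\<in>tcls C D phi xs. \<Union>ys'\<in>tcls C D phi ys. tcls C D phi (xs @ ys))"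
    unfolding tadd_def by (intro SUP_cong refl) (simp add: eq)
  also have "\<dots> = tcls C D phi (xs @ ys)" using ne by simp
  finally show ?thesis .
qed

lemma tlift_tcls: "xs \<in> fsums C \<Longrightarrow>
   (\<And>a b. a \<in> fsums C \<Longrightarrow> b \<in> fsums C \<Longrightarrow> teq C D phi a b \<Longrightarrow> teq C D phi (F a) (F b)) \<Longrightarrow>
   tlift C D phi F (tcls C D phi xs) = tcls C D phi (F xs)"
proof -
  assume xs: "xs \<in> fsums C" and F: "\<And>a b. a \<in> fsums C \<Longrightarrow> b \<in> fsums C \<Longrightarrow> teq C D phi a b \<Longrightarrow> teq C D phi (F a) (F b)"
  have eq: "tcls C D phi (F xs') = tcls C D phi (F xs)" if a: "xs' \<in> tcls C D phi xs" for xs'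
  proof -
    from a have "xs' \<in> fsums C" "teq C D phi xs xs'" by (simp_all add: mem_tcls)
    then have "teq C D phi (F xs) (F xs')" using F xs by blast
    then show ?thesis by (rule tcls_eq[symmetric])
  qed
  have ne: "tcls C D phi xs \<noteq> {}" using tcls_self[OF xs, of D phi] by auto
  have "tlift C D phi F (tcls C D phi xs) = (\<Union>xs'\<in>tcls C D phi xs. tcls C D phi (F xs))"
    unfolding tlift_def by (intro SUP_cong refl) (simp add: eq)
  also have "\<dots> = tcls C D phi (F xs)" using ne by simp
  finally show ?thesis .
qed

context tctx
begin

interpretation C: ring C by (rule C)

lemma fsums_lmul: "c \<in> carrier C \<Longrightarrow> xs \<in> fsums C \<Longrightarrow> lmul C c xs \<in> fsums C"
  unfolding lmul_def by (rule fsums_map) (force simp: fsums_def)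

lemma fsums_rmul: "c \<in> carrier C \<Longrightarrow> xs \<in> fsums C \<Longrightarrow> rmul C c xs \<in> fsums C"
  unfolding rmul_def by (rule fsums_map) (force simp: fsums_def)

lemma teq_eval:
  assumes M: "ring M"
    and cl: "\<And>x y. x \<in> carrier C \<Longrightarrow> y \<in> carrier C \<Longrightarrow> \<beta> (x, y) \<in> carrier M"
    and bl: "\<And>x x' y. \<lbrakk>x \<in> carrier C; x' \<in> carrier C; y \<in> carrier C\<rbrakk> \<Longrightarrow>
        \<beta> (x \<oplus>\<^bsub>C\<^esub> x', y) = \<beta> (x, y) \<oplus>\<^bsub>M\<^esub> \<beta> (x', y)"
    and br: "\<And>x y y'. \<lbrakk>x \<in> carrier C; y \<in> carrier C; y' \<in> carrier C\<rbrakk> \<Longrightarrow>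
        \<beta> (x, y \<oplus>\<^bsub>C\<^esub> y') = \<beta> (x, y) \<oplus>\<^bsub>M\<^esub> \<beta> (x, y')"
    and bb: "\<And>x d y. \<lbrakk>x \<in> carrier C; d \<in> carrier D; y \<in> carrier C\<rbrakk> \<Longrightarrow>
        \<beta> (x \<otimes>\<^bsub>C\<^esub> phi d, y) = \<beta> (x, phi d \<otimes>\<^bsub>C\<^esub> y)"
    and T: "TEQ xs ys" and xs: "xs \<in> fsums C" and ys: "ys \<in> fsums C"
  shows "lsum M (map \<beta> xs) = lsum M (map \<beta> ys)"
proof -
  interpret M: lring M by (rule lring.intro[OF M])
  have cls: "\<And>zs. zs \<in> fsums C \<Longrightarrow> set (map \<beta> zs) \<subseteq> carrier M"
    using cl unfolding fsums_def by auto
  let ?Q = "\<lambda>xs ys. xs \<in> fsums C \<and> ys \<in> fsums C \<and> lsum M (map \<beta> xs) = lsum M (map \<beta> ys)"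
  have "?Q xs ys"
  proof (rule teq_induct[OF _ _ _ _ _ _ _ _ T xs ys])
    show "?Q xs ys" if "xs \<in> fsums C" "ys \<in> fsums C" "mset xs = mset ys" for xs ys
      using cls[OF that(1)] that by (intro conjI M.lsum_mset) simp_all
    show "?Q (xs @ xs') (ys @ ys')" if "?Q xs ys" "?Q xs' ys'" for xs ys xs' ys'
      using that cls by (simp add: M.lsum_append)
    show "?Q xs ys" if "xs \<in> fsums C" "ys \<in> fsums C" "zs \<in> fsums C" "?Q (xs @ zs) (ys @ zs)" for xs ys zs
      using that cls by (simp add: M.lsum_append)
    show "?Q [(x \<oplus>\<^bsub>C\<^esub> x', y)] [(x, y), (x', y)]" if "x \<in> carrier C" "x' \<in> carrier C" "y \<in> carrier C" for x x' y
      using that bl cl by simp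
    show "?Q [(x, y \<oplus>\<^bsub>C\<^esub> y')] [(x, y), (x, y')]" if "x \<in> carrier C" "y \<in> carrier C" "y' \<in> carrier C" for x y y'
      using that br cl by simp
    show "?Q [(x \<otimes>\<^bsub>C\<^esub> phi d, y)] [(x, phi d \<otimes>\<^bsub>C\<^esub> y)]" if "x \<in> carrier C" "d \<in> carrier D" "y \<in> carrier C" for x d y
      using that bb cl by simp
  qed auto
  then show ?thesis by simp
qed

lemma teq_map:
  assumes cl: "\<And>p. p \<in> carrier C \<times> carrier C \<Longrightarrow> g p \<in> carrier C \<times> carrier C"
    and gl: "\<And>x x' y. \<lbrakk>x \<in> carrier C; x' \<in> carrier C; y \<in> carrier C\<rbrakk> \<Longrightarrow>
        TEQ (map g [(x \<oplus>\<^bsub>C\<^esub> x', y)]) (map g [(x, y), (x', y)])"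
    and gr: "\<And>x y y'. \<lbrakk>x \<in> carrier C; y \<in> carrier C; y' \<in> carrier C\<rbrakk> \<Longrightarrow>
        TEQ (map g [(x, y \<oplus>\<^bsub>C\<^esub> y')]) (map g [(x, y), (x, y')])"
    and gb: "\<And>x d y. \<lbrakk>x \<in> carrier C; d \<in> carrier D; y \<in> carrier C\<rbrakk> \<Longrightarrow>
        TEQ (map g [(x \<otimes>\<^bsub>C\<^esub> phi d, y)]) (map g [(x, phi d \<otimes>\<^bsub>C\<^esub> y)])"
    and T: "TEQ xs ys" and xs: "xs \<in> fsums C" and ys: "ys \<in> fsums C"
  shows "TEQ (map g xs) (map g ys)"
proof -
  let ?Q = "\<lambda>xs ys. xs \<in> fsums C \<and> ys \<in> fsums C \<and> TEQ (map g xs) (map g ys)"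
  have "?Q xs ys"
  proof (rule teq_induct[OF _ _ _ _ _ _ _ _ T xs ys])
    show "?Q xs ys" if "xs \<in> fsums C" "ys \<in> fsums C" "mset xs = mset ys" for xs ys
      using that by (auto intro!: teq_mset)
    show "?Q (xs @ xs') (ys @ ys')" if "?Q xs ys" "?Q xs' ys'" for xs ys xs' ys'
      using that by (simp add: teq_append)
    show "?Q xs ys" if "xs \<in> fsums C" "ys \<in> fsums C" "zs \<in> fsums C" "?Q (xs @ zs) (ys @ zs)" for xs ys zs
      using that by (simp add: teq_cancel[of C D phi "map g xs" "map g zs" "map g ys"])
    show "?Q [(x \<oplus>\<^bsub>C\<^esub> x', y)] [(x, y), (x', y)]" if "x \<in> carrier C" "x' \<in> carrier C" "y \<in> carrier C" for x x' y
      using that gl[OF that] by simp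
    show "?Q [(x, y \<oplus>\<^bsub>C\<^esub> y')] [(x, y), (x, y')]" if "x \<in> carrier C" "y \<in> carrier C" "y' \<in> carrier C" for x y y'
      using that gr[OF that] by simp
    show "?Q [(x \<otimes>\<^bsub>C\<^esub> phi d, y)] [(x, phi d \<otimes>\<^bsub>C\<^esub> y)]" if "x \<in> carrier C" "d \<in> carrier D" "y \<in> carrier C" for x d y
      using that gb[OF that] by simp
  qed (auto intro: teq_sym teq_trans)
  then show ?thesis by simp
qed

lemma teq_lmul: "c \<in> carrier C \<Longrightarrow> TEQ xs ys \<Longrightarrow> xs \<in> fsums C \<Longrightarrow> ys \<in> fsums C \<Longrightarrow>
    TEQ (lmul C c xs) (lmul C c ys)"
  unfolding lmul_def
proof (rule teq_map)
  fix x d y assume h: "c \<in> carrier C" "x \<in> carrier C" "d \<in> carrier D" "y \<in> carrier C"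
  then show "TEQ (map (\<lambda>(x, y). (c \<otimes>\<^bsub>C\<^esub> x, y)) [(x \<otimes>\<^bsub>C\<^esub> phi d, y)])
     (map (\<lambda>(x, y). (c \<otimes>\<^bsub>C\<^esub> x, y)) [(x, phi d \<otimes>\<^bsub>C\<^esub> y)])"
    using teq_bal[of "c \<otimes>\<^bsub>C\<^esub> x" d y] by (simp add: C.m_assoc)
qed (auto simp: C.r_distr intro: teq_addl teq_addr)

lemma teq_rmul: "c \<in> carrier C \<Longrightarrow> TEQ xs ys \<Longrightarrow> xs \<in> fsums C \<Longrightarrow> ys \<in> fsums C \<Longrightarrow>
    TEQ (rmul C c xs) (rmul C c ys)"
  unfolding rmul_def
  by (rule teq_map) (auto simp: C.l_distr C.m_assoc intro: teq_addl teq_addr teq_bal)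

lemma tlift_lmul: "c \<in> carrier C \<Longrightarrow> xs \<in> fsums C \<Longrightarrow>
    tlift C D phi (lmul C c) (tcls C D phi xs) = tcls C D phi (lmul C c xs)"
  by (rule tlift_tcls) (auto intro: teq_lmul)

lemma tlift_rmul: "c \<in> carrier C \<Longrightarrow> xs \<in> fsums C \<Longrightarrow>
    tlift C D phi (rmul C c) (tcls C D phi xs) = tcls C D phi (rmul C c xs)"
  by (rule tlift_tcls) (auto intro: teq_rmul)

lemma teq_rmul_add: "a \<in> carrier C \<Longrightarrow> b \<in> carrier C \<Longrightarrow> xs \<in> fsums C \<Longrightarrow>
    TEQ (rmul C (a \<oplus>\<^bsub>C\<^esub> b) xs) (rmul C a xs @ rmul C b xs)"
proof (induction xs)
  case Nil
  then show ?case by (simp add: rmul_def teq_refl)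
next
  case (Cons p xs)
  obtain x y where p: "p = (x, y)" by fastforce
  have "TEQ ([(x, y \<otimes>\<^bsub>C\<^esub> (a \<oplus>\<^bsub>C\<^esub> b))] @ rmul C (a \<oplus>\<^bsub>C\<^esub> b) xs)
       ([(x, y \<otimes>\<^bsub>C\<^esub> a), (x, y \<otimes>\<^bsub>C\<^esub> b)] @ (rmul C a xs @ rmul C b xs))"
    using Cons p by (intro teq_append) (auto simp: C.r_distr intro: teq_addr)
  also have "TEQ \<dots> (rmul C a (p # xs) @ rmul C b (p # xs))"
    by (rule teq_mset) (simp add: rmul_def p)
  finally show ?case by (simp add: rmul_def p)
qed

lemma teq_rmul_zero: "xs \<in> fsums C \<Longrightarrow> TEQ (rmul C \<zero>\<^bsub>C\<^esub> xs) []"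
proof (induction xs)
  case Nil
  then show ?case by (simp add: rmul_def teq_refl)
next
  case (Cons p xs)
  obtain x y where p: "p = (x, y)" by fastforce
  have "TEQ ([(x, \<zero>\<^bsub>C\<^esub>)] @ rmul C \<zero>\<^bsub>C\<^esub> xs) ([] @ [])"
    using Cons p by (intro teq_append teq_zero_r) auto
  moreover have "rmul C \<zero>\<^bsub>C\<^esub> (p # xs) = [(x, \<zero>\<^bsub>C\<^esub>)] @ rmul C \<zero>\<^bsub>C\<^esub> xs"
    using Cons.prems p by (simp add: rmul_def)
  ultimately show ?case by simp
qed

lemma teq_lmul_zero: "xs \<in> fsums C \<Longrightarrow> TEQ (lmul C \<zero>\<^bsub>C\<^esub> xs) []"
proof (induction xs)
  case Nil
  then show ?case by (simp add: lmul_def teq_refl)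
next
  case (Cons p xs)
  obtain x y where p: "p = (x, y)" by fastforce
  have "TEQ ([(\<zero>\<^bsub>C\<^esub>, y)] @ lmul C \<zero>\<^bsub>C\<^esub> xs) ([] @ [])"
    using Cons p by (intro teq_append teq_zero_l) auto
  moreover have "lmul C \<zero>\<^bsub>C\<^esub> (p # xs) = [(\<zero>\<^bsub>C\<^esub>, y)] @ lmul C \<zero>\<^bsub>C\<^esub> xs"
    using Cons.prems p by (simp add: lmul_def)
  ultimately show ?case by simp
qed

end


lemma mset_concat_map_append:
  "mset (concat (map (\<lambda>i. f i @ g i) is)) = mset (concat (map f is) @ concat (map g is))"
  by (induction "is") auto

lemma lmul_concat: "lmul C c (concat xss) = concat (map (lmul C c) xss)"
  unfolding lmul_def by (simp add: map_concat)

lemma rmul_concat: "rmul C c (concat xss) = concat (map (rmul C c) xss)"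
  unfolding rmul_def by (simp add: map_concat)

lemma lmul_append: "lmul C c (xs @ ys) = lmul C c xs @ lmul C c ys"
  by (simp add: lmul_def)

lemma rmul_append: "rmul C c (xs @ ys) = rmul C c xs @ rmul C c ys"
  by (simp add: rmul_def)

lemma left_D2I:
  assumes "iota \<in> tens C D phi \<rightarrow> cvec C n" "pi \<in> cvec C n \<rightarrow> tens C D phi"
    "\<And>X Y. X\<in>tens C D phi \<Longrightarrow> Y\<in>tens C D phi \<Longrightarrow> iota (tadd C D phi X Y) = vadd C n (iota X) (iota Y)"
    "\<And>X d. X\<in>tens C D phi \<Longrightarrow> d\<in>carrier D \<Longrightarrow> iota (tlift C D phi (lmul C (phi d)) X) = vlmul C n (phi d) (iota X)"
    "\<And>X c. X\<in>tens C D phi \<Longrightarrow> c\<in>carrier C \<Longrightarrow> iota (tlift C D phi (rmul C c) X) = vrmul C n c (iota X)"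
    "\<And>v w. v\<in>cvec C n \<Longrightarrow> w\<in>cvec C n \<Longrightarrow> pi (vadd C n v w) = tadd C D phi (pi v) (pi w)"
    "\<And>v d. v\<in>cvec C n \<Longrightarrow> d\<in>carrier D \<Longrightarrow> pi (vlmul C n (phi d) v) = tlift C D phi (lmul C (phi d)) (pi v)"
    "\<And>v c. v\<in>cvec C n \<Longrightarrow> c\<in>carrier C \<Longrightarrow> pi (vrmul C n c v) = tlift C D phi (rmul C c) (pi v)"
    "\<And>X. X\<in>tens C D phi \<Longrightarrow> pi (iota X) = X"
  shows "left_D2 C D phi"
  unfolding left_D2_def
proof (intro exI conjI ballI)
  show "iota \<in> tens C D phi \<rightarrow> cvec C n" by fact
qed (fact | rule assms, assumption+)+

context tctx
begin

interpretation C: lring C by (rule lring.intro[OF C])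

lemma fsums_carrier: "xs \<in> fsums C \<Longrightarrow> (x, y) \<in> set xs \<Longrightarrow> x \<in> carrier C \<and> y \<in> carrier C"
  by (auto simp: fsums_def)

lemma teq_concat_fsums: "xs \<in> fsums C \<Longrightarrow>
    (\<And>p. p \<in> set xs \<Longrightarrow> TEQ [p] (f p)) \<Longrightarrow> TEQ xs (concat (map f xs))"
proof (induction xs)
  case Nil
  then show ?case by (simp add: teq_refl)
next
  case (Cons a xs)
  then show ?case using teq_append[of C D phi "[a]" "f a" xs "concat (map f xs)"] by simp
qed

section \<open>From a left D2 quasibase to left D2\<close>

context
  fixes m beta t
  assumes qb: "left_D2_qb C D phi m beta t"
begin

lemma qb_beta: "i < m \<Longrightarrow> beta i \<in> bend C D phi"
  using qb by (simp add: left_D2_qb_def)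

lemma qb_t: "i < m \<Longrightarrow> t i \<in> tcent C D phi"
  using qb by (simp add: left_D2_qb_def)

lemma qb_t_fsums: "i < m \<Longrightarrow> t i \<in> fsums C"
  using qb_t by (simp add: tcent_def)

lemma beta_closed: "i < m \<Longrightarrow> x \<in> carrier C \<Longrightarrow> beta i x \<in> carrier C"
  using qb_beta by (auto simp: bend_def lend_def Pi_iff)

lemma beta_add: "i < m \<Longrightarrow> x \<in> carrier C \<Longrightarrow> y \<in> carrier C \<Longrightarrow>
    beta i (x \<oplus>\<^bsub>C\<^esub> y) = beta i x \<oplus>\<^bsub>C\<^esub> beta i y"
  using qb_beta by (auto simp: bend_def lend_def additive_on_def)

lemma beta_left: "i < m \<Longrightarrow> d \<in> carrier D \<Longrightarrow> x \<in> carrier C \<Longrightarrow>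
    beta i (phi d \<otimes>\<^bsub>C\<^esub> x) = phi d \<otimes>\<^bsub>C\<^esub> beta i x"
  using qb_beta by (auto simp: bend_def lend_def)

lemma beta_right: "i < m \<Longrightarrow> d \<in> carrier D \<Longrightarrow> x \<in> carrier C \<Longrightarrow>
    beta i (x \<otimes>\<^bsub>C\<^esub> phi d) = beta i x \<otimes>\<^bsub>C\<^esub> phi d"
  using qb_beta by (auto simp: bend_def lend_def)

definition ev :: "nat \<Rightarrow> ('c \<times> 'c) list \<Rightarrow> 'c" where
  "ev i xs = lsum C (map (\<lambda>(x, y). beta i x \<otimes>\<^bsub>C\<^esub> y) xs)"

lemma ev_closed: "i < m \<Longrightarrow> xs \<in> fsums C \<Longrightarrow> ev i xs \<in> carrier C"
  unfolding ev_def by (rule C.lsum_map_closed) (auto simp: fsums_def beta_closed)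

lemma ev_Nil[simp]: "ev i [] = \<zero>\<^bsub>C\<^esub>"
  by (simp add: ev_def)

lemma ev_Cons[simp]: "ev i ((x, y) # xs) = beta i x \<otimes>\<^bsub>C\<^esub> y \<oplus>\<^bsub>C\<^esub> ev i xs"
  by (simp add: ev_def)

lemma ev_append: "i < m \<Longrightarrow> xs \<in> fsums C \<Longrightarrow> ys \<in> fsums C \<Longrightarrow> ev i (xs @ ys) = ev i xs \<oplus>\<^bsub>C\<^esub> ev i ys"
  unfolding ev_def by (subst map_append, rule C.lsum_append) (auto simp: fsums_def beta_closed)

lemma ev_teq: "i < m \<Longrightarrow> TEQ xs ys \<Longrightarrow> xs \<in> fsums C \<Longrightarrow> ys \<in> fsums C \<Longrightarrow> ev i xs = ev i ys"
  unfolding ev_def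
  by (rule teq_eval[OF C])
     (auto simp: beta_closed beta_add beta_right C.l_distr C.r_distr C.m_assoc)

lemma ev_lmul: "i < m \<Longrightarrow> d \<in> carrier D \<Longrightarrow> xs \<in> fsums C \<Longrightarrow>
    ev i (lmul C (phi d) xs) = phi d \<otimes>\<^bsub>C\<^esub> ev i xs"
proof (induction xs)
  case (Cons p xs)
  obtain x y where p: "p = (x, y)" by fastforce
  have c: "x \<in> carrier C" "y \<in> carrier C" "xs \<in> fsums C" using Cons.prems p by auto
  have "ev i (lmul C (phi d) (p # xs)) = beta i (phi d \<otimes>\<^bsub>C\<^esub> x) \<otimes>\<^bsub>C\<^esub> y \<oplus>\<^bsub>C\<^esub> ev i (lmul C (phi d) xs)"
    by (simp add: lmul_def p)
  also have "\<dots> = phi d \<otimes>\<^bsub>C\<^esub> (beta i x \<otimes>\<^bsub>C\<^esub> y) \<oplus>\<^bsub>C\<^esub> phi d \<otimes>\<^bsub>C\<^esub> ev i xs"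
    using Cons c by (simp add: beta_left beta_closed C.m_assoc)
  also have "\<dots> = phi d \<otimes>\<^bsub>C\<^esub> ev i (p # xs)"
    using Cons c by (simp add: p C.r_distr beta_closed ev_closed)
  finally show ?case .
qed (simp add: lmul_def)

lemma ev_rmul: "i < m \<Longrightarrow> c \<in> carrier C \<Longrightarrow> xs \<in> fsums C \<Longrightarrow>
    ev i (rmul C c xs) = ev i xs \<otimes>\<^bsub>C\<^esub> c"
proof (induction xs)
  case (Cons p xs)
  obtain x y where p: "p = (x, y)" by fastforce
  have c: "x \<in> carrier C" "y \<in> carrier C" "xs \<in> fsums C" using Cons.prems p by auto
  have "ev i (rmul C c (p # xs)) = beta i x \<otimes>\<^bsub>C\<^esub> (y \<otimes>\<^bsub>C\<^esub> c) \<oplus>\<^bsub>C\<^esub> ev i (rmul C c xs)"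
    by (simp add: rmul_def p)
  also have "\<dots> = (beta i x \<otimes>\<^bsub>C\<^esub> y) \<otimes>\<^bsub>C\<^esub> c \<oplus>\<^bsub>C\<^esub> ev i xs \<otimes>\<^bsub>C\<^esub> c"
    using Cons c by (simp add: beta_closed C.m_assoc)
  also have "\<dots> = ev i (p # xs) \<otimes>\<^bsub>C\<^esub> c"
    using Cons c by (simp add: p C.l_distr beta_closed ev_closed)
  finally show ?case .
qed (simp add: rmul_def)

definition iotaL :: "('c \<times> 'c) list set \<Rightarrow> nat \<Rightarrow> 'c" where
  "iotaL X = (\<lambda>i\<in>{..<m}. ev i (SOME xs. xs \<in> X))"

definition PL :: "(nat \<Rightarrow> 'c) \<Rightarrow> ('c \<times> 'c) list" where
  "PL v = concat (map (\<lambda>i. rmul C (v i) (t i)) [0..<m])"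

definition piL :: "(nat \<Rightarrow> 'c) \<Rightarrow> ('c \<times> 'c) list set" where
  "piL v = tcls C D phi (PL v)"

lemma iotaL_tcls: "xs \<in> fsums C \<Longrightarrow> iotaL (tcls C D phi xs) = (\<lambda>i\<in>{..<m}. ev i xs)"
proof -
  assume xs: "xs \<in> fsums C"
  let ?s = "SOME ys. ys \<in> tcls C D phi xs"
  have "?s \<in> tcls C D phi xs" by (rule some_tcls[OF xs])
  then have "?s \<in> fsums C" "TEQ xs ?s" by (auto simp: mem_tcls)
  then show ?thesis unfolding iotaL_def using xs by (intro restrict_ext) (simp add: ev_teq)
qed

lemma PL_cong: "(\<And>i. i < m \<Longrightarrow> v i = w i) \<Longrightarrow> PL v = PL w"
  unfolding PL_def by (intro arg_cong[where f = concat] map_cong) auto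

lemma PL_fsums: "(\<And>i. i < m \<Longrightarrow> v i \<in> carrier C) \<Longrightarrow> PL v \<in> fsums C"
  unfolding PL_def by (auto intro!: fsums_rmul qb_t_fsums)

lemma PL_vadd: "(\<And>i. i < m \<Longrightarrow> v i \<in> carrier C) \<Longrightarrow> (\<And>i. i < m \<Longrightarrow> w i \<in> carrier C) \<Longrightarrow>
    TEQ (PL (\<lambda>i. v i \<oplus>\<^bsub>C\<^esub> w i)) (PL v @ PL w)"
proof -
  assume v: "\<And>i. i < m \<Longrightarrow> v i \<in> carrier C" and w: "\<And>i. i < m \<Longrightarrow> w i \<in> carrier C"
  have "TEQ (PL (\<lambda>i. v i \<oplus>\<^bsub>C\<^esub> w i)) (concat (map (\<lambda>i. rmul C (v i) (t i) @ rmul C (w i) (t i)) [0..<m]))"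
    unfolding PL_def by (rule teq_concat) (auto intro!: teq_rmul_add v w qb_t_fsums)
  also have "TEQ \<dots> (PL v @ PL w)"
    unfolding PL_def by (rule teq_mset, rule mset_concat_map_append)
  finally show ?thesis .
qed

lemma PL_lmul: "d \<in> carrier D \<Longrightarrow> (\<And>i. i < m \<Longrightarrow> v i \<in> carrier C) \<Longrightarrow>
    TEQ (PL (\<lambda>i. phi d \<otimes>\<^bsub>C\<^esub> v i)) (lmul C (phi d) (PL v))"
proof -
  assume d: "d \<in> carrier D" and v: "\<And>i. i < m \<Longrightarrow> v i \<in> carrier C"
  have eq1: "rmul C (phi d \<otimes>\<^bsub>C\<^esub> v i) (t i) = rmul C (v i) (rmul C (phi d) (t i))" if "i < m" for i
    using qb_t_fsums[OF that] v[OF that] d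
    unfolding rmul_def by (auto simp: C.m_assoc fsums_def)
  have eq2: "lmul C (phi d) (rmul C (v i) (t i)) = rmul C (v i) (lmul C (phi d) (t i))" for i
    unfolding rmul_def lmul_def by (simp add: case_prod_beta)
  have "TEQ (PL (\<lambda>i. phi d \<otimes>\<^bsub>C\<^esub> v i)) (concat (map (\<lambda>i. rmul C (v i) (lmul C (phi d) (t i))) [0..<m]))"
    unfolding PL_def
  proof (rule teq_concat)
    fix i assume "i \<in> set [0..<m]"
    then have i: "i < m" by simp
    have h: "TEQ (lmul C (phi d) (t i)) (rmul C (phi d) (t i))"
      using qb_t[OF i] d by (simp add: tcent_def)
    have h2: "TEQ (rmul C (v i) (lmul C (phi d) (t i))) (rmul C (v i) (rmul C (phi d) (t i)))"
      by (rule teq_rmul[OF _ h]) (use i d v in \<open>auto intro!: fsums_lmul fsums_rmul qb_t_fsums\<close>)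
    show "TEQ (rmul C (phi d \<otimes>\<^bsub>C\<^esub> v i) (t i)) (rmul C (v i) (lmul C (phi d) (t i)))"
      unfolding eq1[OF i] by (rule teq_sym[OF h2])
  qed
  also have "\<dots> = lmul C (phi d) (PL v)"
    unfolding PL_def lmul_concat by (simp add: eq2 comp_def)
  finally show ?thesis .
qed

lemma PL_rmul: "c \<in> carrier C \<Longrightarrow> (\<And>i. i < m \<Longrightarrow> v i \<in> carrier C) \<Longrightarrow>
    PL (\<lambda>i. v i \<otimes>\<^bsub>C\<^esub> c) = rmul C c (PL v)"
proof -
  assume c: "c \<in> carrier C" and v: "\<And>i. i < m \<Longrightarrow> v i \<in> carrier C"
  have "rmul C (v i \<otimes>\<^bsub>C\<^esub> c) (t i) = rmul C c (rmul C (v i) (t i))" if "i < m" for i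
    using qb_t_fsums[OF that] v[OF that] c
    unfolding rmul_def by (auto simp: C.m_assoc fsums_def)
  then show ?thesis unfolding PL_def rmul_concat
    by (intro arg_cong[where f = concat]) auto
qed

lemma PL_zero: "TEQ (PL (\<lambda>i. \<zero>\<^bsub>C\<^esub>)) []"
proof -
  have "TEQ (PL (\<lambda>i. \<zero>\<^bsub>C\<^esub>)) (concat (map (\<lambda>i. []) [0..<m]))"
    unfolding PL_def by (rule teq_concat) (auto intro: teq_rmul_zero qb_t_fsums)
  moreover have "concat (map (\<lambda>i. []) [0..<m]) = ([] :: ('c \<times> 'c) list)" by (induction m) auto
  ultimately show ?thesis by simp
qed

lemma PL_ev: "xs \<in> fsums C \<Longrightarrow> TEQ xs (PL (\<lambda>i. ev i xs))"
proof (induction xs)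
  case Nil
  then show ?case using PL_zero by (simp add: teq_sym)
next
  case (Cons p xs)
  obtain x y where p: "p = (x, y)" by fastforce
  have c: "x \<in> carrier C" "y \<in> carrier C" "xs \<in> fsums C" using Cons.prems p by auto
  have q: "TEQ [(x, y)] (PL (\<lambda>i. beta i x \<otimes>\<^bsub>C\<^esub> y))"
  proof -
    have "TEQ [(x, y)] (concat (map (\<lambda>i. map (\<lambda>(p, q). (p, q \<otimes>\<^bsub>C\<^esub> beta i x \<otimes>\<^bsub>C\<^esub> y)) (t i)) [0..<m]))"
      using qb c by (simp add: left_D2_qb_def)
    also have "concat (map (\<lambda>i. map (\<lambda>(p, q). (p, q \<otimes>\<^bsub>C\<^esub> beta i x \<otimes>\<^bsub>C\<^esub> y)) (t i)) [0..<m])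
        = PL (\<lambda>i. beta i x \<otimes>\<^bsub>C\<^esub> y)"
      unfolding PL_def rmul_def
    proof (intro arg_cong[where f = concat] map_cong refl)
      fix i pq assume i: "i \<in> set [0..<m]" and pq: "pq \<in> set (t i)"
      obtain a b where ab: "pq = (a, b)" by fastforce
      have "b \<in> carrier C" using qb_t_fsums[of i] i pq ab by (auto simp: fsums_def)
      then show "(case pq of (p, q) \<Rightarrow> (p, q \<otimes>\<^bsub>C\<^esub> beta i x \<otimes>\<^bsub>C\<^esub> y)) =
          (case pq of (u, w) \<Rightarrow> (u, w \<otimes>\<^bsub>C\<^esub> (beta i x \<otimes>\<^bsub>C\<^esub> y)))"
        using ab i c beta_closed by (simp add: C.m_assoc)
    qed
    finally show ?thesis .
  qed
  have h3: "TEQ (PL (\<lambda>i. beta i x \<otimes>\<^bsub>C\<^esub> y \<oplus>\<^bsub>C\<^esub> ev i xs)) (PL (\<lambda>i. beta i x \<otimes>\<^bsub>C\<^esub> y) @ PL (\<lambda>i. ev i xs))"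
    by (rule PL_vadd) (use c in \<open>auto simp: beta_closed ev_closed\<close>)
  have "TEQ ([(x, y)] @ xs) (PL (\<lambda>i. beta i x \<otimes>\<^bsub>C\<^esub> y) @ PL (\<lambda>i. ev i xs))"
    using q Cons c by (intro teq_append) auto
  also have "TEQ \<dots> (PL (\<lambda>i. beta i x \<otimes>\<^bsub>C\<^esub> y \<oplus>\<^bsub>C\<^esub> ev i xs))"
    by (rule teq_sym[OF h3])
  finally show ?case by (simp add: p)
qed

lemma iotaL_fun: "iotaL \<in> tens C D phi \<rightarrow> cvec C m"
proof
  fix X assume "X \<in> tens C D phi"
  then obtain xs where xs: "xs \<in> fsums C" "X = tcls C D phi xs" by (auto elim!: tens_cases)
  show "iotaL X \<in> cvec C m" unfolding cvec_def xs(2) iotaL_tcls[OF xs(1)]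
    using xs(1) by (simp add: restrict_PiE_iff ev_closed)
qed

lemma cvec_carrier: "v \<in> cvec C m \<Longrightarrow> i < m \<Longrightarrow> v i \<in> carrier C"
  by (auto simp: cvec_def)

lemma piL_fun: "piL \<in> cvec C m \<rightarrow> tens C D phi"
  unfolding piL_def by (auto intro!: tcls_in_tens PL_fsums cvec_carrier)

lemma iotaL_tadd: "X \<in> tens C D phi \<Longrightarrow> Y \<in> tens C D phi \<Longrightarrow>
    iotaL (tadd C D phi X Y) = vadd C m (iotaL X) (iotaL Y)"
proof -
  assume X: "X \<in> tens C D phi" and Y: "Y \<in> tens C D phi"
  then obtain xs ys where xs: "xs \<in> fsums C" "X = tcls C D phi xs"
     and ys: "ys \<in> fsums C" "Y = tcls C D phi ys" by (auto elim!: tens_cases)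
  have "iotaL (tadd C D phi X Y) = (\<lambda>i\<in>{..<m}. ev i (xs @ ys))"
    unfolding xs(2) ys(2) tadd_tcls[OF xs(1) ys(1)] by (rule iotaL_tcls) (simp add: xs ys)
  also have "\<dots> = vadd C m (iotaL X) (iotaL Y)"
    unfolding vadd_def xs(2) ys(2) iotaL_tcls[OF xs(1)] iotaL_tcls[OF ys(1)]
    by (intro restrict_ext) (simp add: ev_append xs ys)
  finally show ?thesis .
qed

lemma iotaL_lmul: "X \<in> tens C D phi \<Longrightarrow> d \<in> carrier D \<Longrightarrow>
    iotaL (tlift C D phi (lmul C (phi d)) X) = vlmul C m (phi d) (iotaL X)"
proof -
  assume X: "X \<in> tens C D phi" and d: "d \<in> carrier D"
  then obtain xs where xs: "xs \<in> fsums C" "X = tcls C D phi xs" by (auto elim!: tens_cases)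
  have "iotaL (tlift C D phi (lmul C (phi d)) X) = (\<lambda>i\<in>{..<m}. ev i (lmul C (phi d) xs))"
    unfolding xs(2) tlift_lmul[OF phi_closed[OF d] xs(1)]
    by (rule iotaL_tcls) (simp add: xs d fsums_lmul)
  also have "\<dots> = vlmul C m (phi d) (iotaL X)"
    unfolding vlmul_def xs(2) iotaL_tcls[OF xs(1)]
    by (intro restrict_ext) (simp add: ev_lmul xs d)
  finally show ?thesis .
qed

lemma iotaL_rmul: "X \<in> tens C D phi \<Longrightarrow> c \<in> carrier C \<Longrightarrow>
    iotaL (tlift C D phi (rmul C c) X) = vrmul C m c (iotaL X)"
proof -
  assume X: "X \<in> tens C D phi" and c: "c \<in> carrier C"
  then obtain xs where xs: "xs \<in> fsums C" "X = tcls C D phi xs" by (auto elim!: tens_cases)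
  have "iotaL (tlift C D phi (rmul C c) X) = (\<lambda>i\<in>{..<m}. ev i (rmul C c xs))"
    unfolding xs(2) tlift_rmul[OF c xs(1)]
    by (rule iotaL_tcls) (simp add: xs c fsums_rmul)
  also have "\<dots> = vrmul C m c (iotaL X)"
    unfolding vrmul_def xs(2) iotaL_tcls[OF xs(1)]
    by (intro restrict_ext) (simp add: ev_rmul xs c)
  finally show ?thesis .
qed

lemma piL_vadd: "v \<in> cvec C m \<Longrightarrow> w \<in> cvec C m \<Longrightarrow>
    piL (vadd C m v w) = tadd C D phi (piL v) (piL w)"
proof -
  assume v: "v \<in> cvec C m" and w: "w \<in> cvec C m"
  have vc: "\<And>i. i < m \<Longrightarrow> v i \<in> carrier C" "\<And>i. i < m \<Longrightarrow> w i \<in> carrier C"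
    using v w by (auto simp: cvec_carrier)
  have e1: "PL (vadd C m v w) = PL (\<lambda>i. v i \<oplus>\<^bsub>C\<^esub> w i)" by (rule PL_cong) (simp add: vadd_def)
  have e2: "TEQ (PL (\<lambda>i. v i \<oplus>\<^bsub>C\<^esub> w i)) (PL v @ PL w)" by (rule PL_vadd) (use vc in auto)
  have "tcls C D phi (PL (vadd C m v w)) = tcls C D phi (PL v @ PL w)"
    unfolding e1 by (rule tcls_eq[OF e2])
  moreover have "tadd C D phi (tcls C D phi (PL v)) (tcls C D phi (PL w)) = tcls C D phi (PL v @ PL w)"
    by (rule tadd_tcls; rule PL_fsums; use vc in simp)
  ultimately show ?thesis unfolding piL_def by simp
qed

lemma piL_vlmul: "v \<in> cvec C m \<Longrightarrow> d \<in> carrier D \<Longrightarrow>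
    piL (vlmul C m (phi d) v) = tlift C D phi (lmul C (phi d)) (piL v)"
proof -
  assume v: "v \<in> cvec C m" and d: "d \<in> carrier D"
  have vc: "\<And>i. i < m \<Longrightarrow> v i \<in> carrier C" using v by (auto simp: cvec_carrier)
  have e1: "PL (vlmul C m (phi d) v) = PL (\<lambda>i. phi d \<otimes>\<^bsub>C\<^esub> v i)" by (rule PL_cong) (simp add: vlmul_def)
  have e2: "TEQ (PL (\<lambda>i. phi d \<otimes>\<^bsub>C\<^esub> v i)) (lmul C (phi d) (PL v))" by (rule PL_lmul) (use vc d in auto)
  have "tcls C D phi (PL (vlmul C m (phi d) v)) = tcls C D phi (lmul C (phi d) (PL v))"
    unfolding e1 by (rule tcls_eq[OF e2])
  then show ?thesis
    using tlift_lmul[OF phi_closed[OF d] PL_fsums[OF vc]] by (simp add: piL_def)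
qed

lemma piL_vrmul: "v \<in> cvec C m \<Longrightarrow> c \<in> carrier C \<Longrightarrow>
    piL (vrmul C m c v) = tlift C D phi (rmul C c) (piL v)"
proof -
  assume v: "v \<in> cvec C m" and c: "c \<in> carrier C"
  have vc: "\<And>i. i < m \<Longrightarrow> v i \<in> carrier C" using v by (auto simp: cvec_carrier)
  have "PL (vrmul C m c v) = PL (\<lambda>i. v i \<otimes>\<^bsub>C\<^esub> c)" by (rule PL_cong) (simp add: vrmul_def)
  also have "\<dots> = rmul C c (PL v)" by (rule PL_rmul) (use vc c in auto)
  finally show ?thesis
    using tlift_rmul[OF c PL_fsums[OF vc]] by (simp add: piL_def)
qed

lemma piL_iotaL: "X \<in> tens C D phi \<Longrightarrow> piL (iotaL X) = X"
proof -
  assume X: "X \<in> tens C D phi"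
  then obtain xs where xs: "xs \<in> fsums C" "X = tcls C D phi xs" by (auto elim!: tens_cases)
  have "PL (iotaL X) = PL (\<lambda>i. ev i xs)" by (rule PL_cong) (simp add: xs iotaL_tcls)
  then have "piL (iotaL X) = tcls C D phi (PL (\<lambda>i. ev i xs))" unfolding piL_def by simp
  also have "\<dots> = tcls C D phi xs" using tcls_eq[OF PL_ev[OF xs(1)]] by simp
  finally show ?thesis using xs(2) by simp
qed

lemma qb_left_D2: "left_D2 C D phi"
  by (rule left_D2I[OF iotaL_fun piL_fun iotaL_tadd iotaL_lmul iotaL_rmul piL_vadd piL_vlmul piL_vrmul piL_iotaL])

end

end


context tctx
begin

interpretation C: lring C by (rule lring.intro[OF C])

lemma right_D2_qb_exists:
  assumes "right_D2 C D phi"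
  shows "\<exists>m gamma u. right_D2_qb C D phi m gamma u"
proof -
  from assms obtain n iota pi where
    iota: "iota \<in> tens C D phi \<rightarrow> cvec C n" and
    pi: "pi \<in> cvec C n \<rightarrow> tens C D phi" and
    i_add: "\<forall>X\<in>tens C D phi. \<forall>Y\<in>tens C D phi. iota (tadd C D phi X Y) = vadd C n (iota X) (iota Y)" and
    i_l: "\<forall>X\<in>tens C D phi. \<forall>c\<in>carrier C. iota (tlift C D phi (lmul C c) X) = vlmul C n c (iota X)" and
    i_r: "\<forall>X\<in>tens C D phi. \<forall>d\<in>carrier D. iota (tlift C D phi (rmul C (phi d)) X) = vrmul C n (phi d) (iota X)" and
    p_add: "\<forall>v\<in>cvec C n. \<forall>w\<in>cvec C n. pi (vadd C n v w) = tadd C D phi (pi v) (pi w)" and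
    p_l: "\<forall>v\<in>cvec C n. \<forall>c\<in>carrier C. pi (vlmul C n c v) = tlift C D phi (lmul C c) (pi v)" and
    p_r: "\<forall>v\<in>cvec C n. \<forall>d\<in>carrier D. pi (vrmul C n (phi d) v) = tlift C D phi (rmul C (phi d)) (pi v)" and
    p_i: "\<forall>X\<in>tens C D phi. pi (iota X) = X"
    unfolding right_D2_def by (elim exE conjE) (rule that; assumption)
  define e where "e j = (\<lambda>i\<in>{..<n}. if i = j then \<one>\<^bsub>C\<^esub> else \<zero>\<^bsub>C\<^esub>)" for j
  define gamma where "gamma j a' = iota (tcls C D phi [(\<one>\<^bsub>C\<^esub>, a')]) j" for j a'
  define u where "u j = (SOME xs. xs \<in> pi (e j))" for j
  define G where "G a' = tcls C D phi [(\<one>\<^bsub>C\<^esub>, a')]" for a'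
  have G_fs: "[(\<one>\<^bsub>C\<^esub>, a')] \<in> fsums C" if "a' \<in> carrier C" for a'
    using that by simp
  have G_tens: "G a' \<in> tens C D phi" if "a' \<in> carrier C" for a'
    unfolding G_def using that by (intro tcls_in_tens) simp
  have iota_cvec: "iota X \<in> cvec C n" if "X \<in> tens C D phi" for X
    using iota that by blast
  have pi_tens: "pi v \<in> tens C D phi" if "v \<in> cvec C n" for v
    using pi that by blast
  have cv: "v j \<in> carrier C" if "v \<in> cvec C n" "j < n" for v j
    using that by (auto simp: cvec_def)
  have gamma_closed: "gamma j a' \<in> carrier C" if "j < n" "a' \<in> carrier C" for j a'
    unfolding gamma_def using cv[OF iota_cvec[OF G_tens[OF that(2)]] that(1)] by (simp add: G_def)
  have gamma_add: "gamma j (a' \<oplus>\<^bsub>C\<^esub> a'') = gamma j a' \<oplus>\<^bsub>C\<^esub> gamma j a''"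
    if "j < n" "a' \<in> carrier C" "a'' \<in> carrier C" for j a' a''
  proof -
    have "G (a' \<oplus>\<^bsub>C\<^esub> a'') = tcls C D phi ([(\<one>\<^bsub>C\<^esub>, a')] @ [(\<one>\<^bsub>C\<^esub>, a'')])"
      unfolding G_def using that by (intro tcls_eq) (simp add: teq_addr)
    also have "\<dots> = tadd C D phi (G a') (G a'')"
      unfolding G_def using that by (intro tadd_tcls[symmetric]) simp_all
    finally have "iota (G (a' \<oplus>\<^bsub>C\<^esub> a'')) = vadd C n (iota (G a')) (iota (G a''))"
      using i_add G_tens that by simp
    then show ?thesis using that unfolding gamma_def G_def by (simp add: vadd_def)
  qed
  have gamma_left: "gamma j (phi d \<otimes>\<^bsub>C\<^esub> a') = phi d \<otimes>\<^bsub>C\<^esub> gamma j a'"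
    if "j < n" "d \<in> carrier D" "a' \<in> carrier C" for j d a'
  proof -
    have "G (phi d \<otimes>\<^bsub>C\<^esub> a') = tcls C D phi [(\<one>\<^bsub>C\<^esub> \<otimes>\<^bsub>C\<^esub> phi d, a')]"
      unfolding G_def using that by (intro tcls_eq teq_sym[OF teq_bal]) simp_all
    also have "\<dots> = tcls C D phi (lmul C (phi d) [(\<one>\<^bsub>C\<^esub>, a')])"
      using that by (simp add: lmul_def)
    also have "\<dots> = tlift C D phi (lmul C (phi d)) (G a')"
      unfolding G_def using that by (intro tlift_lmul[symmetric]) simp_all
    finally have "iota (G (phi d \<otimes>\<^bsub>C\<^esub> a')) = vlmul C n (phi d) (iota (G a'))"
      using i_l G_tens that by simp
    then show ?thesis using that unfolding gamma_def G_def by (simp add: vlmul_def)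
  qed
  have gamma_right: "gamma j (a' \<otimes>\<^bsub>C\<^esub> phi d) = gamma j a' \<otimes>\<^bsub>C\<^esub> phi d"
    if "j < n" "d \<in> carrier D" "a' \<in> carrier C" for j d a'
  proof -
    have "G (a' \<otimes>\<^bsub>C\<^esub> phi d) = tcls C D phi (rmul C (phi d) [(\<one>\<^bsub>C\<^esub>, a')])"
      by (simp add: G_def rmul_def)
    also have "\<dots> = tlift C D phi (rmul C (phi d)) (G a')"
      unfolding G_def using that by (intro tlift_rmul[symmetric]) simp_all
    finally have "iota (G (a' \<otimes>\<^bsub>C\<^esub> phi d)) = vrmul C n (phi d) (iota (G a'))"
      using i_r G_tens that by simp
    then show ?thesis using that unfolding gamma_def G_def by (simp add: vrmul_def)
  qed
  have gamma_bend: "gamma j \<in> bend C D phi" if "j < n" for j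
    unfolding bend_def lend_def additive_on_def
    using that gamma_closed gamma_add gamma_left gamma_right by auto
  have e_cvec: "e j \<in> cvec C n" for j
    unfolding e_def cvec_def by (simp add: restrict_PiE_iff)
  have u: "u j \<in> fsums C \<and> pi (e j) = tcls C D phi (u j)" for j
  proof -
    obtain xs where xs: "xs \<in> fsums C" "pi (e j) = tcls C D phi xs"
      by (rule tens_cases[OF pi_tens[OF e_cvec[of j]]]) (rule that; assumption)
    have "u j \<in> tcls C D phi xs" unfolding u_def xs(2) by (rule some_tcls[OF xs(1)])
    then have "u j \<in> fsums C" "TEQ xs (u j)" by (simp_all add: mem_tcls)
    then show ?thesis using xs tcls_eq by simp
  qed
  have u_tcent: "u j \<in> tcent C D phi" for j
    unfolding tcent_def
  proof (intro CollectI conjI ballI)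
    show "u j \<in> fsums C" using u by simp
    fix d assume d: "d \<in> carrier D"
    have "vlmul C n (phi d) (e j) = vrmul C n (phi d) (e j)"
      unfolding vlmul_def vrmul_def e_def using d by (intro restrict_ext) simp
    then have "tlift C D phi (lmul C (phi d)) (pi (e j)) = tlift C D phi (rmul C (phi d)) (pi (e j))"
      using p_l p_r e_cvec d by (metis phi_closed)
    then have "tcls C D phi (lmul C (phi d) (u j)) = tcls C D phi (rmul C (phi d) (u j))"
      using u[of j] d by (simp add: tlift_lmul tlift_rmul)
    then show "TEQ (lmul C (phi d) (u j)) (rmul C (phi d) (u j))"
      using u[of j] d by (simp add: tcls_eq_iff fsums_lmul)
  qed
  define L where "L v k = concat (map (\<lambda>j. lmul C (v j) (u j)) [0..<k])" for v k
  have L_fs: "L v k \<in> fsums C" if "v \<in> cvec C n" "k \<le> n" for v k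
    unfolding L_def using that by (auto intro!: fsums_lmul cv simp: u)
  have decomp: "pi v = tcls C D phi (L v n)" if v: "v \<in> cvec C n" for v
  proof -
    define w where "w k = (\<lambda>i\<in>{..<n}. if i < k then v i else \<zero>\<^bsub>C\<^esub>)" for k
    have w_cvec: "w k \<in> cvec C n" for k
      unfolding w_def cvec_def using cv[OF v] by (simp add: restrict_PiE_iff)
    have "k \<le> n \<Longrightarrow> pi (w k) = tcls C D phi (L v k)" for k
    proof (induction k)
      case 0
      have z: "vadd C n (w 0) (w 0) = w 0" unfolding vadd_def w_def by (intro restrict_ext) simp
      obtain zs where zs: "zs \<in> fsums C" "pi (w 0) = tcls C D phi zs"
        by (rule tens_cases[OF pi_tens[OF w_cvec[of 0]]]) (rule that; assumption)
      have "tcls C D phi zs = tcls C D phi (zs @ zs)"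
        using p_add w_cvec zs z by (metis tadd_tcls)
      then have "TEQ zs (zs @ zs)" using zs by (simp add: tcls_eq_iff)
      then have "TEQ ([] @ zs) (zs @ zs)" by simp
      then have "TEQ [] zs" by (rule teq_cancel)
      then show ?case using zs by (simp add: L_def tcls_eq teq_sym)
    next
      case (Suc k)
      then have k: "k < n" "k \<le> n" by auto
      have ws: "w (Suc k) = vadd C n (w k) (vlmul C n (v k) (e k))"
        unfolding vadd_def vlmul_def w_def e_def using cv[OF v] k
        by (intro restrict_ext) (auto simp: less_Suc_eq)
      have vl: "vlmul C n (v k) (e k) \<in> cvec C n"
        unfolding vlmul_def cvec_def using cv[OF e_cvec] cv[OF v k(1)] by (simp add: restrict_PiE_iff)
      have "pi (w (Suc k)) = tadd C D phi (pi (w k)) (pi (vlmul C n (v k) (e k)))"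
        unfolding ws using p_add w_cvec vl by blast
      also have "pi (vlmul C n (v k) (e k)) = tlift C D phi (lmul C (v k)) (pi (e k))"
        using p_l e_cvec cv[OF v k(1)] by blast
      finally have "pi (w (Suc k)) = tadd C D phi (pi (w k)) (tlift C D phi (lmul C (v k)) (pi (e k)))" .
      also have "\<dots> = tadd C D phi (tcls C D phi (L v k)) (tcls C D phi (lmul C (v k) (u k)))"
        using Suc.IH k u[of k] cv[OF v k(1)] by (simp add: tlift_lmul)
      also have "\<dots> = tcls C D phi (L v (Suc k))"
        using L_fs[OF v k(2)] u[of k] cv[OF v k(1)] by (simp add: tadd_tcls fsums_lmul L_def)
      finally show ?case .
    qed
    moreover have "w n = v" unfolding w_def using v by (auto simp: cvec_def PiE_def extensional_def)
    ultimately show ?thesis by auto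
  qed
  have qbeq: "TEQ [(a, a')] (concat (map (\<lambda>j. map (\<lambda>(p, q). (a \<otimes>\<^bsub>C\<^esub> gamma j a' \<otimes>\<^bsub>C\<^esub> p, q)) (u j)) [0..<n]))"
    if a: "a \<in> carrier C" "a' \<in> carrier C" for a a'
  proof -
    have "tcls C D phi [(a, a')] = tcls C D phi (lmul C a [(\<one>\<^bsub>C\<^esub>, a')])"
      using a by (simp add: lmul_def)
    also have "\<dots> = tlift C D phi (lmul C a) (G a')"
      unfolding G_def using a by (intro tlift_lmul[symmetric]) simp_all
    finally have t1: "tcls C D phi [(a, a')] = tlift C D phi (lmul C a) (G a')" .
    let ?v = "vlmul C n a (iota (G a'))"
    have vc: "?v \<in> cvec C n" unfolding vlmul_def cvec_def
      using a cv[OF iota_cvec[OF G_tens[OF a(2)]]] by (simp add: restrict_PiE_iff)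
    have "tcls C D phi [(a, a')] = pi (iota (tcls C D phi [(a, a')]))"
      using p_i a by (simp add: tcls_in_tens)
    also have "\<dots> = pi ?v" unfolding t1 using i_l G_tens a by simp
    also have "\<dots> = tcls C D phi (L ?v n)" by (rule decomp[OF vc])
    also have "L ?v n = concat (map (\<lambda>j. map (\<lambda>(p, q). (a \<otimes>\<^bsub>C\<^esub> gamma j a' \<otimes>\<^bsub>C\<^esub> p, q)) (u j)) [0..<n])"
      unfolding L_def lmul_def gamma_def G_def
      by (intro arg_cong[where f = concat] map_cong refl) (simp add: vlmul_def)
    finally show ?thesis using a by (simp add: tcls_eq_iff)
  qed
  have "right_D2_qb C D phi n gamma u"
    unfolding right_D2_qb_def using gamma_bend u_tcent qbeq by blast
  then show ?thesis by blast
qed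

end


locale ectx =
  fixes A :: "'a ring" and B :: "'b ring" and phi :: "'b \<Rightarrow> 'a"
  assumes A: "ring A" and phi: "phi \<in> carrier B \<rightarrow> carrier A"
begin

sublocale A: lring A by (rule lring.intro[OF A])

abbreviation E where "E \<equiv> End_ring A B phi"

lemma phiA[simp]: "d \<in> carrier B \<Longrightarrow> phi d \<in> carrier A"
  using phi by auto

lemma E_carrier: "carrier E = lend A B phi \<inter> extensional (carrier A)"
  by (simp add: End_ring_def)

lemma E_mem: "f \<in> carrier E \<longleftrightarrow> f \<in> carrier A \<rightarrow> carrier A \<and> additive_on A f \<and>
   (\<forall>d\<in>carrier B. \<forall>x\<in>carrier A. f (phi d \<otimes>\<^bsub>A\<^esub> x) = phi d \<otimes>\<^bsub>A\<^esub> f x) \<and> f \<in> extensional (carrier A)"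
  by (simp add: End_ring_def lend_def)

lemma E_closed: "f \<in> carrier E \<Longrightarrow> x \<in> carrier A \<Longrightarrow> f x \<in> carrier A"
  by (auto simp: E_mem)

lemma E_add: "f \<in> carrier E \<Longrightarrow> x \<in> carrier A \<Longrightarrow> y \<in> carrier A \<Longrightarrow> f (x \<oplus>\<^bsub>A\<^esub> y) = f x \<oplus>\<^bsub>A\<^esub> f y"
  by (auto simp: E_mem additive_on_def)

lemma E_lin: "f \<in> carrier E \<Longrightarrow> d \<in> carrier B \<Longrightarrow> x \<in> carrier A \<Longrightarrow> f (phi d \<otimes>\<^bsub>A\<^esub> x) = phi d \<otimes>\<^bsub>A\<^esub> f x"
  by (auto simp: E_mem)

lemma E_ext: "f \<in> carrier E \<Longrightarrow> g \<in> carrier E \<Longrightarrow> (\<And>x. x \<in> carrier A \<Longrightarrow> f x = g x) \<Longrightarrow> f = g"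
  by (rule extensionalityI[of _ "carrier A"]) (auto simp: E_mem)

lemma E_fun: "f \<in> carrier E \<Longrightarrow> f \<in> carrier A \<rightarrow> carrier A"
  by (auto simp: E_mem)

lemma E_additive: "f \<in> carrier E \<Longrightarrow> additive_on A f"
  by (auto simp: E_mem)

lemma E_memI: "(\<And>x. x \<in> carrier A \<Longrightarrow> f x \<in> carrier A) \<Longrightarrow>
   (\<And>x y. x \<in> carrier A \<Longrightarrow> y \<in> carrier A \<Longrightarrow> f (x \<oplus>\<^bsub>A\<^esub> y) = f x \<oplus>\<^bsub>A\<^esub> f y) \<Longrightarrow>
   (\<And>d x. d \<in> carrier B \<Longrightarrow> x \<in> carrier A \<Longrightarrow> f (phi d \<otimes>\<^bsub>A\<^esub> x) = phi d \<otimes>\<^bsub>A\<^esub> f x) \<Longrightarrow>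
   f \<in> extensional (carrier A) \<Longrightarrow> f \<in> carrier E"
  by (auto simp: E_mem additive_on_def)

lemma E_mult_apply[simp]: "x \<in> carrier A \<Longrightarrow> (f \<otimes>\<^bsub>E\<^esub> g) x = f (g x)"
  by (simp add: End_ring_def)

lemma E_add_apply[simp]: "x \<in> carrier A \<Longrightarrow> (f \<oplus>\<^bsub>E\<^esub> g) x = f x \<oplus>\<^bsub>A\<^esub> g x"
  by (simp add: End_ring_def)

lemma E_zero_apply[simp]: "x \<in> carrier A \<Longrightarrow> \<zero>\<^bsub>E\<^esub> x = \<zero>\<^bsub>A\<^esub>"
  by (simp add: End_ring_def)

lemma E_one_apply[simp]: "x \<in> carrier A \<Longrightarrow> \<one>\<^bsub>E\<^esub> x = x"
  by (simp add: End_ring_def)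

lemma E_mult_ext: "f \<otimes>\<^bsub>E\<^esub> g \<in> extensional (carrier A)"
  by (simp add: End_ring_def)

lemma E_add_ext: "f \<oplus>\<^bsub>E\<^esub> g \<in> extensional (carrier A)"
  by (simp add: End_ring_def)

lemma E_mult_closed: "f \<in> carrier E \<Longrightarrow> g \<in> carrier E \<Longrightarrow> f \<otimes>\<^bsub>E\<^esub> g \<in> carrier E"
  by (rule E_memI) (simp_all add: E_closed E_add E_lin E_mult_ext)

lemma E_add_closed: "f \<in> carrier E \<Longrightarrow> g \<in> carrier E \<Longrightarrow> f \<oplus>\<^bsub>E\<^esub> g \<in> carrier E"
  by (rule E_memI) (simp_all add: E_closed E_add E_lin E_add_ext A.r_distr A.a_ac)

lemma E_zero_closed: "\<zero>\<^bsub>E\<^esub> \<in> carrier E"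
  by (rule E_memI) (simp_all add: End_ring_def)

lemma E_one_closed: "\<one>\<^bsub>E\<^esub> \<in> carrier E"
  by (rule E_memI) (simp_all add: End_ring_def)

lemma E_ring: "ring E"
proof (rule ringI)
  show "abelian_group E"
  proof (rule abelian_groupI)
    fix x y z assume xyz: "x \<in> carrier E" "y \<in> carrier E" "z \<in> carrier E"
    show "x \<oplus>\<^bsub>E\<^esub> y \<oplus>\<^bsub>E\<^esub> z = x \<oplus>\<^bsub>E\<^esub> (y \<oplus>\<^bsub>E\<^esub> z)"
      using xyz by (intro E_ext) (simp_all add: E_add_closed E_closed A.a_assoc)
  next
    fix x y assume xy: "x \<in> carrier E" "y \<in> carrier E"
    show "x \<oplus>\<^bsub>E\<^esub> y \<in> carrier E" using xy by (rule E_add_closed)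
    show "x \<oplus>\<^bsub>E\<^esub> y = y \<oplus>\<^bsub>E\<^esub> x"
      using xy by (intro E_ext) (simp_all add: E_add_closed E_closed A.a_comm)
  next
    show "\<zero>\<^bsub>E\<^esub> \<in> carrier E" by (rule E_zero_closed)
  next
    fix x assume x: "x \<in> carrier E"
    show "\<zero>\<^bsub>E\<^esub> \<oplus>\<^bsub>E\<^esub> x = x"
      using x by (intro E_ext) (simp_all add: E_add_closed E_zero_closed E_closed)
    define y where "y = (\<lambda>a\<in>carrier A. \<ominus>\<^bsub>A\<^esub> x a)"
    have y: "y \<in> carrier E"
      unfolding y_def using x
      by (intro E_memI) (simp_all add: E_closed E_add E_lin A.minus_add A.r_minus)
    have "y \<oplus>\<^bsub>E\<^esub> x = \<zero>\<^bsub>E\<^esub>"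
      using x y by (intro E_ext) (simp_all add: E_add_closed E_zero_closed E_closed y_def A.l_neg)
    then show "\<exists>y\<in>carrier E. y \<oplus>\<^bsub>E\<^esub> x = \<zero>\<^bsub>E\<^esub>" using y by blast
  qed
next
  show "monoid E"
  proof (rule monoidI)
    fix x y z assume xyz: "x \<in> carrier E" "y \<in> carrier E" "z \<in> carrier E"
    show "x \<otimes>\<^bsub>E\<^esub> y \<otimes>\<^bsub>E\<^esub> z = x \<otimes>\<^bsub>E\<^esub> (y \<otimes>\<^bsub>E\<^esub> z)"
      using xyz by (intro E_ext) (simp_all add: E_mult_closed E_closed)
  next
    fix x y assume xy: "x \<in> carrier E" "y \<in> carrier E"
    show "x \<otimes>\<^bsub>E\<^esub> y \<in> carrier E" using xy by (rule E_mult_closed)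
  next
    show "\<one>\<^bsub>E\<^esub> \<in> carrier E" by (rule E_one_closed)
  next
    fix x assume x: "x \<in> carrier E"
    show "\<one>\<^bsub>E\<^esub> \<otimes>\<^bsub>E\<^esub> x = x"
      using x by (intro E_ext) (simp_all add: E_mult_closed E_one_closed E_closed)
    show "x \<otimes>\<^bsub>E\<^esub> \<one>\<^bsub>E\<^esub> = x"
      using x by (intro E_ext) (simp_all add: E_mult_closed E_one_closed E_closed)
  qed
next
  fix x y z assume xyz: "x \<in> carrier E" "y \<in> carrier E" "z \<in> carrier E"
  show "(x \<oplus>\<^bsub>E\<^esub> y) \<otimes>\<^bsub>E\<^esub> z = x \<otimes>\<^bsub>E\<^esub> z \<oplus>\<^bsub>E\<^esub> y \<otimes>\<^bsub>E\<^esub> z"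
    using xyz by (intro E_ext) (simp_all add: E_mult_closed E_add_closed E_closed)
  show "z \<otimes>\<^bsub>E\<^esub> (x \<oplus>\<^bsub>E\<^esub> y) = z \<otimes>\<^bsub>E\<^esub> x \<oplus>\<^bsub>E\<^esub> z \<otimes>\<^bsub>E\<^esub> y"
    using xyz by (intro E_ext) (simp_all add: E_mult_closed E_add_closed E_closed E_add)
qed

sublocale E: lring E by (rule lring.intro[OF E_ring])

lemma rho_apply[simp]: "x \<in> carrier A \<Longrightarrow> rho A a x = x \<otimes>\<^bsub>A\<^esub> a"
  by (simp add: rho_def)

lemma rho_closed: "a \<in> carrier A \<Longrightarrow> rho A a \<in> carrier E"
  by (rule E_memI) (simp_all add: rho_def A.l_distr A.m_assoc)

lemma op_carrier[simp]: "carrier (op_ring A) = carrier A"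
  by (simp add: op_ring_def)

sublocale ET: tctx E "op_ring A" "rho A"
  by (rule tctx.intro[OF E_ring]) (auto intro: rho_closed)

lemma E_lsum_apply: "x \<in> carrier A \<Longrightarrow> lsum E fs x = lsum A (map (\<lambda>f. f x) fs)"
  by (induction fs) (simp_all add: lsum_def)

end


lemma (in lring) lsum_cong:
  "(\<And>p. p \<in> set xs \<Longrightarrow> f p = g p) \<Longrightarrow> lsum R (map f xs) = lsum R (map g xs)"
  by (simp cong: map_cong)

context tctx
begin

interpretation C: lring C by (rule lring.intro[OF C])

lemma teq_lsum_r: "x \<in> carrier C \<Longrightarrow> set ys \<subseteq> carrier C \<Longrightarrow>
    TEQ [(x, lsum C ys)] (map (\<lambda>y. (x, y)) ys)"
proof (induction ys)
  case Nil
  then show ?case by (simp add: teq_zero_r)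
next
  case (Cons y ys)
  have "TEQ [(x, y \<oplus>\<^bsub>C\<^esub> lsum C ys)] ([(x, y)] @ [(x, lsum C ys)])"
    using Cons.prems by (simp add: teq_addr)
  also have "TEQ \<dots> ([(x, y)] @ map (\<lambda>y. (x, y)) ys)"
    using Cons by (intro teq_append teq_refl) auto
  finally show ?case by simp
qed

lemma teq_map_pw: "(\<And>i. i \<in> set is \<Longrightarrow> TEQ [f i] [g i]) \<Longrightarrow> TEQ (map f is) (map g is)"
proof (induction "is")
  case Nil
  then show ?case by (simp add: teq_refl)
next
  case (Cons a "is")
  then show ?case using teq_append[of C D phi "[f a]" "[g a]" "map f is" "map g is"] by simp
qed

lemma teq_map_nil: "(\<And>i. i \<in> set is \<Longrightarrow> TEQ [f i] []) \<Longrightarrow> TEQ (map f is) []"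
proof (induction "is")
  case Nil
  then show ?case by (simp add: teq_refl)
next
  case (Cons a "is")
  then show ?case using teq_append[of C D phi "[f a]" "[]" "map f is" "[]"] by simp
qed

lemma teq_map_addl: "(\<And>i. i \<in> set is \<Longrightarrow> a i \<in> carrier C \<and> b i \<in> carrier C \<and> g i \<in> carrier C) \<Longrightarrow>
    TEQ (map (\<lambda>i. (a i \<oplus>\<^bsub>C\<^esub> b i, g i)) is) (map (\<lambda>i. (a i, g i)) is @ map (\<lambda>i. (b i, g i)) is)"
proof (induction "is")
  case Nil
  then show ?case by (simp add: teq_refl)
next
  case (Cons j "is")
  have "TEQ ([(a j \<oplus>\<^bsub>C\<^esub> b j, g j)] @ map (\<lambda>i. (a i \<oplus>\<^bsub>C\<^esub> b i, g i)) is)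
     ([(a j, g j), (b j, g j)] @ (map (\<lambda>i. (a i, g i)) is @ map (\<lambda>i. (b i, g i)) is))"
    using Cons by (intro teq_append teq_addl) auto
  also have "TEQ \<dots> (map (\<lambda>i. (a i, g i)) (j # is) @ map (\<lambda>i. (b i, g i)) (j # is))"
    by (rule teq_mset) simp
  finally show ?case by simp
qed

end

locale d2ctx = ectx A B phi for A :: "'a ring" and B :: "'b ring" and phi +
  fixes m :: nat and gamma :: "nat \<Rightarrow> 'a \<Rightarrow> 'a" and u :: "nat \<Rightarrow> ('a \<times> 'a) list"
  assumes qb: "right_D2_qb A B phi m gamma u"
begin

sublocale AT: tctx A B phi by (rule tctx.intro[OF A phi])

lemma gamma_bend: "j < m \<Longrightarrow> gamma j \<in> bend A B phi"
  using qb by (simp add: right_D2_qb_def)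

lemma gamma_closed: "j < m \<Longrightarrow> x \<in> carrier A \<Longrightarrow> gamma j x \<in> carrier A"
  using gamma_bend by (auto simp: bend_def lend_def Pi_iff)

lemma gamma_fun: "j < m \<Longrightarrow> gamma j \<in> carrier A \<rightarrow> carrier A"
  using gamma_bend by (auto simp: bend_def lend_def)

lemma gamma_additive: "j < m \<Longrightarrow> additive_on A (gamma j)"
  using gamma_bend by (auto simp: bend_def lend_def)

lemma gamma_add: "j < m \<Longrightarrow> x \<in> carrier A \<Longrightarrow> y \<in> carrier A \<Longrightarrow>
    gamma j (x \<oplus>\<^bsub>A\<^esub> y) = gamma j x \<oplus>\<^bsub>A\<^esub> gamma j y"
  using gamma_bend by (auto simp: bend_def lend_def additive_on_def)

lemma gamma_left: "j < m \<Longrightarrow> d \<in> carrier B \<Longrightarrow> x \<in> carrier A \<Longrightarrow>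
    gamma j (phi d \<otimes>\<^bsub>A\<^esub> x) = phi d \<otimes>\<^bsub>A\<^esub> gamma j x"
  using gamma_bend by (auto simp: bend_def lend_def)

lemma gamma_right: "j < m \<Longrightarrow> d \<in> carrier B \<Longrightarrow> x \<in> carrier A \<Longrightarrow>
    gamma j (x \<otimes>\<^bsub>A\<^esub> phi d) = gamma j x \<otimes>\<^bsub>A\<^esub> phi d"
  using gamma_bend by (auto simp: bend_def lend_def)

lemma u_tcent: "l < m \<Longrightarrow> u l \<in> tcent A B phi"
  using qb by (simp add: right_D2_qb_def)

lemma u_fs: "l < m \<Longrightarrow> u l \<in> fsums A"
  using u_tcent by (simp add: tcent_def)

lemma u_carr: "l < m \<Longrightarrow> pq \<in> set (u l) \<Longrightarrow> fst pq \<in> carrier A \<and> snd pq \<in> carrier A"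
proof -
  assume a: "l < m" and b: "pq \<in> set (u l)"
  have "set (u l) \<subseteq> carrier A \<times> carrier A" using u_fs[OF a] by (simp add: fsums_def)
  then have "pq \<in> carrier A \<times> carrier A" using b by blast
  then show ?thesis by (simp add: mem_Times_iff)
qed

lemma u_carr2: "l < m \<Longrightarrow> (p, q) \<in> set (u l) \<Longrightarrow> p \<in> carrier A \<and> q \<in> carrier A"
  using u_carr[of l "(p, q)"] by simp

lemma u_carr3: "(p, q) \<in> set (u l) \<Longrightarrow> l < m \<Longrightarrow> p \<in> carrier A \<and> q \<in> carrier A"
  using u_carr2 by blast

lemma u_bal: "l < m \<Longrightarrow> d \<in> carrier B \<Longrightarrow> AT.TEQ (lmul A (phi d) (u l)) (rmul A (phi d) (u l))"
  using u_tcent by (simp add: tcent_def)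

lemma qb_eq: "a \<in> carrier A \<Longrightarrow> a' \<in> carrier A \<Longrightarrow>
    AT.TEQ [(a, a')] (concat (map (\<lambda>j. map (\<lambda>(p, q). (a \<otimes>\<^bsub>A\<^esub> gamma j a' \<otimes>\<^bsub>A\<^esub> p, q)) (u j)) [0..<m]))"
  using qb by (simp add: right_D2_qb_def)

lemma qb_fs: "a \<in> carrier A \<Longrightarrow> a' \<in> carrier A \<Longrightarrow>
    concat (map (\<lambda>j. map (\<lambda>(p, q). (a \<otimes>\<^bsub>A\<^esub> gamma j a' \<otimes>\<^bsub>A\<^esub> p, q)) (u j)) [0..<m]) \<in> fsums A"
proof -
  assume a: "a \<in> carrier A" "a' \<in> carrier A"
  have h: "a \<otimes>\<^bsub>A\<^esub> gamma j a' \<otimes>\<^bsub>A\<^esub> p \<in> carrier A \<and> q \<in> carrier A" if "j < m" "(p, q) \<in> set (u j)" for j p q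
    using u_carr2[OF that] gamma_closed[OF that(1) a(2)] a by simp
  show ?thesis unfolding fsums_def by (auto dest: h)
qed

lemma lsum_concat_u:
  assumes "\<And>j p q. j < m \<Longrightarrow> (p, q) \<in> set (u j) \<Longrightarrow> F j p q \<in> carrier A"
  shows "lsum A (concat (map (\<lambda>j. map (\<lambda>(p, q). F j p q) (u j)) [0..<m])) =
         lsum A (map (\<lambda>j. lsum A (map (\<lambda>(p, q). F j p q) (u j))) [0..<m])"
proof (subst A.lsum_concat)
  fix xs assume "xs \<in> set (map (\<lambda>j. map (\<lambda>(p, q). F j p q) (u j)) [0..<m])"
  then obtain j where j: "j < m" "xs = map (\<lambda>(p, q). F j p q) (u j)" by auto
  show "set xs \<subseteq> carrier A"
  proof
    fix y assume "y \<in> set xs"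
    then obtain p q where "(p, q) \<in> set (u j)" "y = F j p q" using j by auto
    then show "y \<in> carrier A" using assms j by simp
  qed
qed (simp add: comp_def)

lemma qb_eval:
  assumes a: "a \<in> carrier A" "a' \<in> carrier A"
    and cl: "\<And>x y. x \<in> carrier A \<Longrightarrow> y \<in> carrier A \<Longrightarrow> h x y \<in> carrier A"
    and bl: "\<And>x x' y. \<lbrakk>x \<in> carrier A; x' \<in> carrier A; y \<in> carrier A\<rbrakk> \<Longrightarrow>
        h (x \<oplus>\<^bsub>A\<^esub> x') y = h x y \<oplus>\<^bsub>A\<^esub> h x' y"
    and br: "\<And>x y y'. \<lbrakk>x \<in> carrier A; y \<in> carrier A; y' \<in> carrier A\<rbrakk> \<Longrightarrow>
        h x (y \<oplus>\<^bsub>A\<^esub> y') = h x y \<oplus>\<^bsub>A\<^esub> h x y'"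
    and bb: "\<And>x d y. \<lbrakk>x \<in> carrier A; d \<in> carrier B; y \<in> carrier A\<rbrakk> \<Longrightarrow>
        h (x \<otimes>\<^bsub>A\<^esub> phi d) y = h x (phi d \<otimes>\<^bsub>A\<^esub> y)"
  shows "h a a' = lsum A (map (\<lambda>j. lsum A (map (\<lambda>(p, q). h (a \<otimes>\<^bsub>A\<^esub> gamma j a' \<otimes>\<^bsub>A\<^esub> p) q) (u j))) [0..<m])"
proof -
  have hc: "h (a \<otimes>\<^bsub>A\<^esub> gamma j a' \<otimes>\<^bsub>A\<^esub> p) q \<in> carrier A" if "j < m" "(p, q) \<in> set (u j)" for j p q
  proof -
    have "p \<in> carrier A" "q \<in> carrier A" using u_carr2[OF that] by auto
    then show ?thesis using cl gamma_closed[OF that(1) a(2)] a by simp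
  qed
  have "lsum A (map (\<lambda>(x, y). h x y) [(a, a')]) =
        lsum A (map (\<lambda>(x, y). h x y) (concat (map (\<lambda>j. map (\<lambda>(p, q). (a \<otimes>\<^bsub>A\<^esub> gamma j a' \<otimes>\<^bsub>A\<^esub> p, q)) (u j)) [0..<m])))"
    by (rule AT.teq_eval[OF A]) (use cl bl br bb qb_eq[OF a] qb_fs[OF a] a in auto)
  also have "map (\<lambda>(x, y). h x y) (concat (map (\<lambda>j. map (\<lambda>(p, q). (a \<otimes>\<^bsub>A\<^esub> gamma j a' \<otimes>\<^bsub>A\<^esub> p, q)) (u j)) [0..<m]))
      = concat (map (\<lambda>j. map (\<lambda>(p, q). h (a \<otimes>\<^bsub>A\<^esub> gamma j a' \<otimes>\<^bsub>A\<^esub> p) q) (u j)) [0..<m])"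
    by (simp add: map_concat comp_def split_def)
  also have "lsum A \<dots> = lsum A (map (\<lambda>j. lsum A (map (\<lambda>(p, q). h (a \<otimes>\<^bsub>A\<^esub> gamma j a' \<otimes>\<^bsub>A\<^esub> p) q) (u j))) [0..<m])"
    by (rule lsum_concat_u) (rule hc)
  finally show ?thesis using cl a by simp
qed

definition gam :: "nat \<Rightarrow> 'a \<Rightarrow> 'a" where
  "gam l = restrict (gamma l) (carrier A)"

lemma gam_closed: "l < m \<Longrightarrow> gam l \<in> carrier E"
  unfolding gam_def by (rule E_memI) (simp_all add: gamma_closed gamma_add gamma_left)

lemma gam_apply[simp]: "x \<in> carrier A \<Longrightarrow> gam l x = gamma l x"
  by (simp add: gam_def)

definition cc :: "nat \<Rightarrow> ('a \<Rightarrow> 'a) \<Rightarrow> 'a" where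
  "cc l G = lsum A (map (\<lambda>(p, q). p \<otimes>\<^bsub>A\<^esub> G q) (u l))"

lemma cc_closed: "l < m \<Longrightarrow> (\<And>x. x \<in> carrier A \<Longrightarrow> G x \<in> carrier A) \<Longrightarrow> cc l G \<in> carrier A"
  unfolding cc_def by (rule A.lsum_map_closed) (auto dest: u_carr3)

lemma cc_closedE: "l < m \<Longrightarrow> G \<in> carrier E \<Longrightarrow> cc l G \<in> carrier A"
  by (rule cc_closed) (auto simp: E_closed)

lemma expand: "G \<in> carrier E \<Longrightarrow> x \<in> carrier A \<Longrightarrow> G x = lsum A (map (\<lambda>l. gamma l x \<otimes>\<^bsub>A\<^esub> cc l G) [0..<m])"
proof -
  assume G: "G \<in> carrier E" and x: "x \<in> carrier A"
  have "\<one>\<^bsub>A\<^esub> \<otimes>\<^bsub>A\<^esub> G x = lsum A (map (\<lambda>j. lsum A (map (\<lambda>(p, q). (\<one>\<^bsub>A\<^esub> \<otimes>\<^bsub>A\<^esub> gamma j x \<otimes>\<^bsub>A\<^esub> p) \<otimes>\<^bsub>A\<^esub> G q) (u j))) [0..<m])"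
    by (rule qb_eval[where h = "\<lambda>a b. a \<otimes>\<^bsub>A\<^esub> G b"])
       (use G x in \<open>auto simp: E_closed E_add E_lin A.l_distr A.r_distr A.m_assoc\<close>)
  also have "\<dots> = lsum A (map (\<lambda>l. gamma l x \<otimes>\<^bsub>A\<^esub> cc l G) [0..<m])"
  proof (rule A.lsum_cong)
    fix j assume "j \<in> set [0..<m]"
    then have j: "j < m" by simp
    have "gamma j x \<otimes>\<^bsub>A\<^esub> cc j G = lsum A (map (\<lambda>pq. gamma j x \<otimes>\<^bsub>A\<^esub> (case pq of (p, q) \<Rightarrow> p \<otimes>\<^bsub>A\<^esub> G q)) (u j))"
      unfolding cc_def using j x G
      by (intro A.lsum_mult_left) (auto simp: gamma_closed E_closed dest: u_carr3)
    also have "\<dots> = lsum A (map (\<lambda>(p, q). (\<one>\<^bsub>A\<^esub> \<otimes>\<^bsub>A\<^esub> gamma j x \<otimes>\<^bsub>A\<^esub> p) \<otimes>\<^bsub>A\<^esub> G q) (u j))"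
      using j x G by (intro A.lsum_cong) (auto simp: gamma_closed E_closed A.m_assoc dest: u_carr3)
    finally show "lsum A (map (\<lambda>(p, q). (\<one>\<^bsub>A\<^esub> \<otimes>\<^bsub>A\<^esub> gamma j x \<otimes>\<^bsub>A\<^esub> p) \<otimes>\<^bsub>A\<^esub> G q) (u j)) =
        gamma j x \<otimes>\<^bsub>A\<^esub> cc j G" by simp
  qed
  finally show ?thesis using G x by (simp add: E_closed)
qed

end


context d2ctx
begin

lemma u_carr4: "pq \<in> set (u l) \<Longrightarrow> l < m \<Longrightarrow> fst pq \<in> carrier A \<and> snd pq \<in> carrier A"
  using u_carr by blast

lemma E_as_sum: "G \<in> carrier E \<Longrightarrow> G = lsum E (map (\<lambda>l. rho A (cc l G) \<otimes>\<^bsub>E\<^esub> gam l) [0..<m])"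
proof (rule E_ext)
  assume G: "G \<in> carrier E"
  show "G \<in> carrier E" by (rule G)
  show "lsum E (map (\<lambda>l. rho A (cc l G) \<otimes>\<^bsub>E\<^esub> gam l) [0..<m]) \<in> carrier E"
    using G by (intro E.lsum_map_closed) (auto intro!: E_mult_closed rho_closed cc_closedE gam_closed)
  fix x assume x: "x \<in> carrier A"
  have "lsum E (map (\<lambda>l. rho A (cc l G) \<otimes>\<^bsub>E\<^esub> gam l) [0..<m]) x
      = lsum A (map (\<lambda>l. (rho A (cc l G) \<otimes>\<^bsub>E\<^esub> gam l) x) [0..<m])"
    using x by (simp add: E_lsum_apply comp_def)
  also have "\<dots> = lsum A (map (\<lambda>l. gamma l x \<otimes>\<^bsub>A\<^esub> cc l G) [0..<m])"
    by (rule A.lsum_cong) (use x G in \<open>simp add: gamma_closed\<close>)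
  finally show "G x = lsum E (map (\<lambda>l. rho A (cc l G) \<otimes>\<^bsub>E\<^esub> gam l) [0..<m]) x"
    using expand[OF G x] by simp
qed

lemma NF1: "F \<in> carrier E \<Longrightarrow> G \<in> carrier E \<Longrightarrow>
    ET.TEQ [(F, G)] (map (\<lambda>l. (F \<otimes>\<^bsub>E\<^esub> rho A (cc l G), gam l)) [0..<m])"
proof -
  assume F: "F \<in> carrier E" and G: "G \<in> carrier E"
  let ?ys = "map (\<lambda>l. rho A (cc l G) \<otimes>\<^bsub>E\<^esub> gam l) [0..<m]"
  have ys: "set ?ys \<subseteq> carrier E" using G by (auto intro!: E_mult_closed rho_closed cc_closedE gam_closed)
  have "ET.TEQ [(F, G)] [(F, lsum E ?ys)]" using E_as_sum[OF G] by (simp add: teq_refl)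
  also have "ET.TEQ \<dots> (map (\<lambda>y. (F, y)) ?ys)" by (rule ET.teq_lsum_r[OF F ys])
  also have "map (\<lambda>y. (F, y)) ?ys = map (\<lambda>l. (F, rho A (cc l G) \<otimes>\<^bsub>E\<^esub> gam l)) [0..<m]" by simp
  also have "ET.TEQ \<dots> (map (\<lambda>l. (F \<otimes>\<^bsub>E\<^esub> rho A (cc l G), gam l)) [0..<m])"
  proof (rule ET.teq_map_pw)
    fix l assume "l \<in> set [0..<m]"
    then have l: "l < m" by simp
    show "ET.TEQ [(F, rho A (cc l G) \<otimes>\<^bsub>E\<^esub> gam l)] [(F \<otimes>\<^bsub>E\<^esub> rho A (cc l G), gam l)]"
      by (rule teq_sym, rule ET.teq_bal) (use F G l in \<open>auto intro: cc_closedE gam_closed\<close>)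
  qed
  finally show ?thesis .
qed

definition K :: "nat \<Rightarrow> (('a \<Rightarrow> 'a) \<times> ('a \<Rightarrow> 'a)) list \<Rightarrow> 'a \<Rightarrow> 'a" where
  "K l xs = lsum E (map (\<lambda>(F, G). F \<otimes>\<^bsub>E\<^esub> rho A (cc l G)) xs)"

lemma K_Nil[simp]: "K l [] = \<zero>\<^bsub>E\<^esub>"
  by (simp add: K_def)

lemma K_Cons[simp]: "K l ((F, G) # xs) = F \<otimes>\<^bsub>E\<^esub> rho A (cc l G) \<oplus>\<^bsub>E\<^esub> K l xs"
  by (simp add: K_def)

lemma K_closed: "l < m \<Longrightarrow> xs \<in> fsums E \<Longrightarrow> K l xs \<in> carrier E"
  unfolding K_def
  by (rule E.lsum_map_closed) (auto simp: fsums_def intro!: E_mult_closed rho_closed cc_closedE)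

lemma NF: "xs \<in> fsums E \<Longrightarrow> ET.TEQ xs (map (\<lambda>l. (K l xs, gam l)) [0..<m])"
proof (induction xs)
  case Nil
  have "ET.TEQ (map (\<lambda>l. (K l [], gam l)) [0..<m]) []"
    by (rule ET.teq_map_nil) (auto intro!: ET.teq_zero_l gam_closed)
  then show ?case by (rule teq_sym)
next
  case (Cons p xs)
  obtain F G where p: "p = (F, G)" by fastforce
  have FG: "F \<in> carrier E" "G \<in> carrier E" "xs \<in> fsums E" using Cons.prems p by auto
  have "ET.TEQ ([(F, G)] @ xs) (map (\<lambda>l. (F \<otimes>\<^bsub>E\<^esub> rho A (cc l G), gam l)) [0..<m] @ map (\<lambda>l. (K l xs, gam l)) [0..<m])"
    by (rule teq_append[OF NF1[OF FG(1,2)] Cons.IH[OF FG(3)]])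
  also have "ET.TEQ \<dots> (map (\<lambda>l. (F \<otimes>\<^bsub>E\<^esub> rho A (cc l G) \<oplus>\<^bsub>E\<^esub> K l xs, gam l)) [0..<m])"
    by (rule teq_sym, rule ET.teq_map_addl)
       (use FG in \<open>auto intro!: E_mult_closed rho_closed cc_closedE gam_closed K_closed\<close>)
  finally show ?case by (simp add: p)
qed

lemma teq_by_K: "xs \<in> fsums E \<Longrightarrow> ys \<in> fsums E \<Longrightarrow> (\<And>l. l < m \<Longrightarrow> K l xs = K l ys) \<Longrightarrow> ET.TEQ xs ys"
proof -
  assume xs: "xs \<in> fsums E" and ys: "ys \<in> fsums E" and K: "\<And>l. l < m \<Longrightarrow> K l xs = K l ys"
  have "ET.TEQ xs (map (\<lambda>l. (K l xs, gam l)) [0..<m])" by (rule NF[OF xs])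
  also have "map (\<lambda>l. (K l xs, gam l)) [0..<m] = map (\<lambda>l. (K l ys, gam l)) [0..<m]"
    using K by (intro map_cong) auto
  also have "ET.TEQ \<dots> ys" by (rule teq_sym[OF NF[OF ys]])
  finally show ?thesis .
qed

lemma K_apply: "x \<in> carrier A \<Longrightarrow> K l xs x = lsum A (map (\<lambda>(F, G). F (x \<otimes>\<^bsub>A\<^esub> cc l G)) xs)"
  unfolding K_def by (simp add: E_lsum_apply comp_def split_def)

lemma K_eqI: "l < m \<Longrightarrow> xs \<in> fsums E \<Longrightarrow> ys \<in> fsums E \<Longrightarrow>
   (\<And>x. x \<in> carrier A \<Longrightarrow> lsum A (map (\<lambda>(F, G). F (x \<otimes>\<^bsub>A\<^esub> cc l G)) xs) =
                          lsum A (map (\<lambda>(F, G). F (x \<otimes>\<^bsub>A\<^esub> cc l G)) ys)) \<Longrightarrow> K l xs = K l ys"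
  by (rule E_ext) (simp_all add: K_closed K_apply)

lemma I1: "j < m \<Longrightarrow> y \<in> carrier A \<Longrightarrow> z \<in> carrier A \<Longrightarrow>
    lsum A (map (\<lambda>k. lsum A (map (\<lambda>(p, q). gamma j (y \<otimes>\<^bsub>A\<^esub> gamma k z \<otimes>\<^bsub>A\<^esub> p) \<otimes>\<^bsub>A\<^esub> q) (u k))) [0..<m])
    = gamma j y \<otimes>\<^bsub>A\<^esub> z"
  by (rule qb_eval[where h = "\<lambda>a b. gamma j a \<otimes>\<^bsub>A\<^esub> b", symmetric])
     (auto simp: gamma_closed gamma_add gamma_right A.l_distr A.r_distr A.m_assoc)

lemma I2: "f \<in> carrier E \<Longrightarrow> y \<in> carrier A \<Longrightarrow> w \<in> carrier A \<Longrightarrow>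
    lsum A (map (\<lambda>j. gamma j y \<otimes>\<^bsub>A\<^esub> lsum A (map (\<lambda>(r, s). r \<otimes>\<^bsub>A\<^esub> f (s \<otimes>\<^bsub>A\<^esub> w)) (u j))) [0..<m])
    = f (y \<otimes>\<^bsub>A\<^esub> w)"
proof -
  assume f: "f \<in> carrier E" and y: "y \<in> carrier A" and w: "w \<in> carrier A"
  have "\<one>\<^bsub>A\<^esub> \<otimes>\<^bsub>A\<^esub> f (y \<otimes>\<^bsub>A\<^esub> w) = lsum A (map (\<lambda>j. lsum A (map (\<lambda>(p, q). (\<one>\<^bsub>A\<^esub> \<otimes>\<^bsub>A\<^esub> gamma j y \<otimes>\<^bsub>A\<^esub> p) \<otimes>\<^bsub>A\<^esub> f (q \<otimes>\<^bsub>A\<^esub> w)) (u j))) [0..<m])"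
    by (rule qb_eval[where h = "\<lambda>a b. a \<otimes>\<^bsub>A\<^esub> f (b \<otimes>\<^bsub>A\<^esub> w)"])
       (use f y w in \<open>auto simp: E_closed E_add E_lin A.l_distr A.r_distr A.m_assoc\<close>)
  also have "\<dots> = lsum A (map (\<lambda>j. gamma j y \<otimes>\<^bsub>A\<^esub> lsum A (map (\<lambda>(r, s). r \<otimes>\<^bsub>A\<^esub> f (s \<otimes>\<^bsub>A\<^esub> w)) (u j))) [0..<m])"
  proof (rule A.lsum_cong)
    fix j assume "j \<in> set [0..<m]"
    then have j: "j < m" by simp
    have "gamma j y \<otimes>\<^bsub>A\<^esub> lsum A (map (\<lambda>(r, s). r \<otimes>\<^bsub>A\<^esub> f (s \<otimes>\<^bsub>A\<^esub> w)) (u j))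
        = lsum A (map (\<lambda>pq. gamma j y \<otimes>\<^bsub>A\<^esub> (case pq of (r, s) \<Rightarrow> r \<otimes>\<^bsub>A\<^esub> f (s \<otimes>\<^bsub>A\<^esub> w))) (u j))"
      using j y w f
      by (intro A.lsum_mult_left) (auto simp: gamma_closed E_closed dest: u_carr3)
    also have "\<dots> = lsum A (map (\<lambda>(p, q). (\<one>\<^bsub>A\<^esub> \<otimes>\<^bsub>A\<^esub> gamma j y \<otimes>\<^bsub>A\<^esub> p) \<otimes>\<^bsub>A\<^esub> f (q \<otimes>\<^bsub>A\<^esub> w)) (u j))"
      using j y w f by (intro A.lsum_cong) (auto simp: gamma_closed E_closed A.m_assoc dest: u_carr3)
    finally show "lsum A (map (\<lambda>(p, q). (\<one>\<^bsub>A\<^esub> \<otimes>\<^bsub>A\<^esub> gamma j y \<otimes>\<^bsub>A\<^esub> p) \<otimes>\<^bsub>A\<^esub> f (q \<otimes>\<^bsub>A\<^esub> w)) (u j))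
        = gamma j y \<otimes>\<^bsub>A\<^esub> lsum A (map (\<lambda>(r, s). r \<otimes>\<^bsub>A\<^esub> f (s \<otimes>\<^bsub>A\<^esub> w)) (u j))" by simp
  qed
  finally show ?thesis using f y w by (simp add: E_closed)
qed

end


context d2ctx
begin

lemma dist1:
  assumes jkl: "j < m" "k < m" "l < m" and x: "x \<in> carrier A" and p: "p \<in> carrier A" and q: "q \<in> carrier A"
    and Zc: "\<And>y. y \<in> carrier A \<Longrightarrow> Z y \<in> carrier A"
  shows "gamma j ((x \<otimes>\<^bsub>A\<^esub> lsum A (map (\<lambda>b. fst b \<otimes>\<^bsub>A\<^esub> gamma k (Z (snd b))) (u l))) \<otimes>\<^bsub>A\<^esub> p) \<otimes>\<^bsub>A\<^esub> q
       = lsum A (map (\<lambda>b. gamma j (x \<otimes>\<^bsub>A\<^esub> fst b \<otimes>\<^bsub>A\<^esub> gamma k (Z (snd b)) \<otimes>\<^bsub>A\<^esub> p) \<otimes>\<^bsub>A\<^esub> q) (u l))"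
proof -
  have c: "fst b \<in> carrier A" "snd b \<in> carrier A" if "b \<in> set (u l)" for b
    using u_carr4[OF that jkl(3)] by auto
  have c0: "fst b \<otimes>\<^bsub>A\<^esub> gamma k (Z (snd b)) \<in> carrier A" if "b \<in> set (u l)" for b
    using c[OF that] Zc gamma_closed jkl by simp
  have "x \<otimes>\<^bsub>A\<^esub> lsum A (map (\<lambda>b. fst b \<otimes>\<^bsub>A\<^esub> gamma k (Z (snd b))) (u l))
      = lsum A (map (\<lambda>b. x \<otimes>\<^bsub>A\<^esub> (fst b \<otimes>\<^bsub>A\<^esub> gamma k (Z (snd b)))) (u l))"
    by (rule A.lsum_mult_left[OF x c0])
  then have "(x \<otimes>\<^bsub>A\<^esub> lsum A (map (\<lambda>b. fst b \<otimes>\<^bsub>A\<^esub> gamma k (Z (snd b))) (u l))) \<otimes>\<^bsub>A\<^esub> p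
      = lsum A (map (\<lambda>b. x \<otimes>\<^bsub>A\<^esub> (fst b \<otimes>\<^bsub>A\<^esub> gamma k (Z (snd b))) \<otimes>\<^bsub>A\<^esub> p) (u l))"
    using x c0 by (simp add: A.lsum_mult_right[OF p])
  then have "gamma j ((x \<otimes>\<^bsub>A\<^esub> lsum A (map (\<lambda>b. fst b \<otimes>\<^bsub>A\<^esub> gamma k (Z (snd b))) (u l))) \<otimes>\<^bsub>A\<^esub> p)
      = lsum A (map (\<lambda>b. gamma j (x \<otimes>\<^bsub>A\<^esub> (fst b \<otimes>\<^bsub>A\<^esub> gamma k (Z (snd b))) \<otimes>\<^bsub>A\<^esub> p)) (u l))"
    using x c0 p by (simp add: A.additive_lsum[OF gamma_fun[OF jkl(1)] gamma_additive[OF jkl(1)]])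
  then have "gamma j ((x \<otimes>\<^bsub>A\<^esub> lsum A (map (\<lambda>b. fst b \<otimes>\<^bsub>A\<^esub> gamma k (Z (snd b))) (u l))) \<otimes>\<^bsub>A\<^esub> p) \<otimes>\<^bsub>A\<^esub> q
      = lsum A (map (\<lambda>b. gamma j (x \<otimes>\<^bsub>A\<^esub> (fst b \<otimes>\<^bsub>A\<^esub> gamma k (Z (snd b))) \<otimes>\<^bsub>A\<^esub> p) \<otimes>\<^bsub>A\<^esub> q) (u l))"
    using x c0 p jkl by (simp add: A.lsum_mult_right[OF q] gamma_closed)
  also have "\<dots> = lsum A (map (\<lambda>b. gamma j (x \<otimes>\<^bsub>A\<^esub> fst b \<otimes>\<^bsub>A\<^esub> gamma k (Z (snd b)) \<otimes>\<^bsub>A\<^esub> p) \<otimes>\<^bsub>A\<^esub> q) (u l))"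
    by (rule A.lsum_cong) (use x c Zc gamma_closed jkl in \<open>simp add: A.m_assoc\<close>)
  finally show ?thesis .
qed

lemma inner:
  assumes jl: "j < m" "l < m" and x: "x \<in> carrier A"
    and Zc: "\<And>y. y \<in> carrier A \<Longrightarrow> Z y \<in> carrier A"
  shows "lsum A (map (\<lambda>k. lsum A (map (\<lambda>a. gamma j ((x \<otimes>\<^bsub>A\<^esub> lsum A (map (\<lambda>b. fst b \<otimes>\<^bsub>A\<^esub> gamma k (Z (snd b))) (u l))) \<otimes>\<^bsub>A\<^esub> fst a) \<otimes>\<^bsub>A\<^esub> snd a) (u k))) [0..<m])
       = lsum A (map (\<lambda>b. gamma j (x \<otimes>\<^bsub>A\<^esub> fst b) \<otimes>\<^bsub>A\<^esub> Z (snd b)) (u l))"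
proof -
  define T where "T k a b = gamma j (x \<otimes>\<^bsub>A\<^esub> fst b \<otimes>\<^bsub>A\<^esub> gamma k (Z (snd b)) \<otimes>\<^bsub>A\<^esub> fst a) \<otimes>\<^bsub>A\<^esub> snd a" for k a b
  have cu: "fst a \<in> carrier A" "snd a \<in> carrier A" if "a \<in> set (u k)" "k < m" for a k
    using u_carr4[OF that] by auto
  have Tc: "T k a b \<in> carrier A" if "k < m" "a \<in> set (u k)" "b \<in> set (u l)" for k a b
    unfolding T_def using cu[OF that(2,1)] cu[OF that(3) jl(2)] x Zc gamma_closed jl that(1) by simp
  have "lsum A (map (\<lambda>k. lsum A (map (\<lambda>a. gamma j ((x \<otimes>\<^bsub>A\<^esub> lsum A (map (\<lambda>b. fst b \<otimes>\<^bsub>A\<^esub> gamma k (Z (snd b))) (u l))) \<otimes>\<^bsub>A\<^esub> fst a) \<otimes>\<^bsub>A\<^esub> snd a) (u k))) [0..<m])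
      = lsum A (map (\<lambda>k. lsum A (map (\<lambda>a. lsum A (map (T k a) (u l))) (u k))) [0..<m])"
  proof (rule A.lsum_cong)
    fix k assume "k \<in> set [0..<m]"
    then have k: "k < m" by simp
    show "lsum A (map (\<lambda>a. gamma j ((x \<otimes>\<^bsub>A\<^esub> lsum A (map (\<lambda>b. fst b \<otimes>\<^bsub>A\<^esub> gamma k (Z (snd b))) (u l))) \<otimes>\<^bsub>A\<^esub> fst a) \<otimes>\<^bsub>A\<^esub> snd a) (u k))
        = lsum A (map (\<lambda>a. lsum A (map (T k a) (u l))) (u k))"
    proof (rule A.lsum_cong)
      fix a assume a: "a \<in> set (u k)"
      show "gamma j ((x \<otimes>\<^bsub>A\<^esub> lsum A (map (\<lambda>b. fst b \<otimes>\<^bsub>A\<^esub> gamma k (Z (snd b))) (u l))) \<otimes>\<^bsub>A\<^esub> fst a) \<otimes>\<^bsub>A\<^esub> snd a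
          = lsum A (map (T k a) (u l))"
        using dist1[where Z = Z, OF jl(1) k jl(2) x cu(1)[OF a k] cu(2)[OF a k] Zc] unfolding T_def by simp
    qed
  qed
  also have "\<dots> = lsum A (map (\<lambda>k. lsum A (map (\<lambda>b. lsum A (map (\<lambda>a. T k a b) (u k))) (u l))) [0..<m])"
    by (rule A.lsum_cong, rule A.lsum_swap) (use Tc in auto)
  also have "\<dots> = lsum A (map (\<lambda>b. lsum A (map (\<lambda>k. lsum A (map (\<lambda>a. T k a b) (u k))) [0..<m])) (u l))"
    by (rule A.lsum_swap) (use Tc in \<open>auto intro!: A.lsum_map_closed\<close>)
  also have "\<dots> = lsum A (map (\<lambda>b. gamma j (x \<otimes>\<^bsub>A\<^esub> fst b) \<otimes>\<^bsub>A\<^esub> Z (snd b)) (u l))"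
  proof (rule A.lsum_cong)
    fix b assume b: "b \<in> set (u l)"
    have "lsum A (map (\<lambda>k. lsum A (map (\<lambda>(p, q). gamma j (x \<otimes>\<^bsub>A\<^esub> fst b \<otimes>\<^bsub>A\<^esub> gamma k (Z (snd b)) \<otimes>\<^bsub>A\<^esub> p) \<otimes>\<^bsub>A\<^esub> q) (u k))) [0..<m])
        = gamma j (x \<otimes>\<^bsub>A\<^esub> fst b) \<otimes>\<^bsub>A\<^esub> Z (snd b)"
      by (rule I1[OF jl(1)]) (use cu[OF b jl(2)] x Zc in simp_all)
    then show "lsum A (map (\<lambda>k. lsum A (map (\<lambda>a. T k a b) (u k))) [0..<m]) = gamma j (x \<otimes>\<^bsub>A\<^esub> fst b) \<otimes>\<^bsub>A\<^esub> Z (snd b)"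
      by (simp add: T_def split_def)
  qed
  finally show ?thesis .
qed

end


context ectx
begin

lemma left_bal: "left_balanced E (op_ring A) (rho A)"
  unfolding left_balanced_def
proof (intro allI impI)
  fix h assume H: "h \<in> carrier E \<rightarrow> carrier E \<and> additive_on E h \<and>
       (\<forall>f\<in>lend E (op_ring A) (rho A). \<forall>x\<in>carrier E. h (f x) = f (h x))"
  then have hc: "h \<in> carrier E \<rightarrow> carrier E"
    and hf: "\<And>f x. f \<in> lend E (op_ring A) (rho A) \<Longrightarrow> x \<in> carrier E \<Longrightarrow> h (f x) = f (h x)" by auto
  define d where "d = h \<one>\<^bsub>E\<^esub> \<one>\<^bsub>A\<^esub>"
  have h1: "h \<one>\<^bsub>E\<^esub> \<in> carrier E" using hc E_one_closed by blast
  have d: "d \<in> carrier A" unfolding d_def by (rule E_closed[OF h1 A.one_closed])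
  have "h g0 = rho A d \<otimes>\<^bsub>E\<^esub> g0" if g0: "g0 \<in> carrier E" for g0
  proof -
    define F where "F g = restrict (\<lambda>x. g0 x \<otimes>\<^bsub>A\<^esub> g \<one>\<^bsub>A\<^esub>) (carrier A)" for g
    have Fc: "F g \<in> carrier E" if g: "g \<in> carrier E" for g
      unfolding F_def
      by (rule E_memI) (use g0 g in \<open>simp_all add: E_closed E_add E_lin A.l_distr A.m_assoc\<close>)
    have "F \<in> lend E (op_ring A) (rho A)"
      unfolding lend_def additive_on_def
    proof (intro CollectI conjI ballI)
      show "F \<in> carrier E \<rightarrow> carrier E" using Fc by blast
    next
      fix x y assume xy: "x \<in> carrier E" "y \<in> carrier E"
      show "F (x \<oplus>\<^bsub>E\<^esub> y) = F x \<oplus>\<^bsub>E\<^esub> F y"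
      proof (rule E_ext)
        show "F (x \<oplus>\<^bsub>E\<^esub> y) \<in> carrier E" by (rule Fc[OF E_add_closed[OF xy]])
        show "F x \<oplus>\<^bsub>E\<^esub> F y \<in> carrier E" by (rule E_add_closed[OF Fc[OF xy(1)] Fc[OF xy(2)]])
        fix z assume z: "z \<in> carrier A"
        show "F (x \<oplus>\<^bsub>E\<^esub> y) z = (F x \<oplus>\<^bsub>E\<^esub> F y) z"
          using z xy g0 by (simp add: F_def E_closed A.r_distr)
      qed
    next
      fix a x assume a: "a \<in> carrier (op_ring A)" and x: "x \<in> carrier E"
      then have a': "a \<in> carrier A" by simp
      show "F (rho A a \<otimes>\<^bsub>E\<^esub> x) = rho A a \<otimes>\<^bsub>E\<^esub> F x"
      proof (rule E_ext)
        show "F (rho A a \<otimes>\<^bsub>E\<^esub> x) \<in> carrier E" by (rule Fc[OF E_mult_closed[OF rho_closed[OF a'] x]])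
        show "rho A a \<otimes>\<^bsub>E\<^esub> F x \<in> carrier E" by (rule E_mult_closed[OF rho_closed[OF a'] Fc[OF x]])
        fix z assume z: "z \<in> carrier A"
        show "F (rho A a \<otimes>\<^bsub>E\<^esub> x) z = (rho A a \<otimes>\<^bsub>E\<^esub> F x) z"
          using z x g0 a' by (simp add: F_def E_closed A.m_assoc)
      qed
    qed
    then have "h (F \<one>\<^bsub>E\<^esub>) = F (h \<one>\<^bsub>E\<^esub>)" using hf E_one_closed by blast
    moreover have "F \<one>\<^bsub>E\<^esub> = g0"
    proof (rule E_ext)
      show "F \<one>\<^bsub>E\<^esub> \<in> carrier E" by (rule Fc[OF E_one_closed])
      fix z assume z: "z \<in> carrier A"
      show "F \<one>\<^bsub>E\<^esub> z = g0 z" using z g0 by (simp add: F_def E_closed)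
    qed (rule g0)
    moreover have "F (h \<one>\<^bsub>E\<^esub>) = rho A d \<otimes>\<^bsub>E\<^esub> g0"
    proof (rule E_ext)
      show "F (h \<one>\<^bsub>E\<^esub>) \<in> carrier E" by (rule Fc[OF h1])
      show "rho A d \<otimes>\<^bsub>E\<^esub> g0 \<in> carrier E" by (rule E_mult_closed[OF rho_closed[OF d] g0])
      fix z assume z: "z \<in> carrier A"
      show "F (h \<one>\<^bsub>E\<^esub>) z = (rho A d \<otimes>\<^bsub>E\<^esub> g0) z" using z g0 by (simp add: F_def E_closed d_def)
    qed
    ultimately show ?thesis by simp
  qed
  then show "\<exists>d\<in>carrier (op_ring A). \<forall>x\<in>carrier E. h x = rho A d \<otimes>\<^bsub>E\<^esub> x"
    using d by auto
qed

end

context d2ctx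
begin

definition Phi :: "nat \<Rightarrow> 'a \<Rightarrow> 'a \<Rightarrow> 'a \<Rightarrow> 'a" where
  "Phi j p q = restrict (\<lambda>x. gamma j (x \<otimes>\<^bsub>A\<^esub> p) \<otimes>\<^bsub>A\<^esub> q) (carrier A)"

lemma Phi_apply[simp]: "x \<in> carrier A \<Longrightarrow> Phi j p q x = gamma j (x \<otimes>\<^bsub>A\<^esub> p) \<otimes>\<^bsub>A\<^esub> q"
  by (simp add: Phi_def)

lemma Phi_closed: "j < m \<Longrightarrow> p \<in> carrier A \<Longrightarrow> q \<in> carrier A \<Longrightarrow> Phi j p q \<in> carrier E"
  unfolding Phi_def
  by (rule E_memI) (simp_all add: gamma_closed gamma_add gamma_left A.l_distr A.m_assoc)

lemma qbT_eq: "qbT A m gamma u j = concat (map (\<lambda>k. map (\<lambda>(p, q). (Phi j p q, gam k)) (u k)) [0..<m])"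
  by (simp add: qbT_def Phi_def gam_def)

lemma qbT_fs: "j < m \<Longrightarrow> qbT A m gamma u j \<in> fsums E"
  unfolding qbT_eq fsums_def
  by (auto simp: Phi_closed gam_closed dest!: u_carr3)

lemma qbB_apply: "f \<in> carrier E \<Longrightarrow> x \<in> carrier A \<Longrightarrow>
    qbB A B phi u j f x = lsum A (map (\<lambda>(p, q). p \<otimes>\<^bsub>A\<^esub> f (q \<otimes>\<^bsub>A\<^esub> x)) (u j))"
  by (simp add: qbB_def)

lemma qbB_closed: "j < m \<Longrightarrow> f \<in> carrier E \<Longrightarrow> qbB A B phi u j f \<in> carrier E"
proof -
  assume j: "j < m" and f: "f \<in> carrier E"
  have cl: "lsum A (map (\<lambda>(p, q). p \<otimes>\<^bsub>A\<^esub> f (q \<otimes>\<^bsub>A\<^esub> x)) (u j)) \<in> carrier A" if "x \<in> carrier A" for x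
    by (rule A.lsum_map_closed) (use that f j in \<open>auto simp: E_closed dest!: u_carr3\<close>)
  show ?thesis
    unfolding qbB_def
  proof (simp add: f, rule E_memI)
    fix x assume x: "x \<in> carrier A"
    show "(\<lambda>x\<in>carrier A. lsum A (map (\<lambda>(p, q). p \<otimes>\<^bsub>A\<^esub> f (q \<otimes>\<^bsub>A\<^esub> x)) (u j))) x \<in> carrier A"
      using cl x by simp
  next
    fix x y assume x: "x \<in> carrier A" and y: "y \<in> carrier A"
    have "lsum A (map (\<lambda>(p, q). p \<otimes>\<^bsub>A\<^esub> f (q \<otimes>\<^bsub>A\<^esub> (x \<oplus>\<^bsub>A\<^esub> y))) (u j))
        = lsum A (map (\<lambda>pq. (case pq of (p, q) \<Rightarrow> p \<otimes>\<^bsub>A\<^esub> f (q \<otimes>\<^bsub>A\<^esub> x)) \<oplus>\<^bsub>A\<^esub> (case pq of (p, q) \<Rightarrow> p \<otimes>\<^bsub>A\<^esub> f (q \<otimes>\<^bsub>A\<^esub> y))) (u j))"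
      by (rule A.lsum_cong) (use x y f j in \<open>auto simp: E_closed E_add A.r_distr dest!: u_carr3\<close>)
    also have "\<dots> = lsum A (map (\<lambda>(p, q). p \<otimes>\<^bsub>A\<^esub> f (q \<otimes>\<^bsub>A\<^esub> x)) (u j)) \<oplus>\<^bsub>A\<^esub> lsum A (map (\<lambda>(p, q). p \<otimes>\<^bsub>A\<^esub> f (q \<otimes>\<^bsub>A\<^esub> y)) (u j))"
      by (rule A.lsum_map_add) (use x y f j in \<open>auto simp: E_closed dest!: u_carr3\<close>)
    finally show "(\<lambda>x\<in>carrier A. lsum A (map (\<lambda>(p, q). p \<otimes>\<^bsub>A\<^esub> f (q \<otimes>\<^bsub>A\<^esub> x)) (u j))) (x \<oplus>\<^bsub>A\<^esub> y) =
        (\<lambda>x\<in>carrier A. lsum A (map (\<lambda>(p, q). p \<otimes>\<^bsub>A\<^esub> f (q \<otimes>\<^bsub>A\<^esub> x)) (u j))) x \<oplus>\<^bsub>A\<^esub>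
        (\<lambda>x\<in>carrier A. lsum A (map (\<lambda>(p, q). p \<otimes>\<^bsub>A\<^esub> f (q \<otimes>\<^bsub>A\<^esub> x)) (u j))) y"
      using x y by simp
  next
    fix d x assume d: "d \<in> carrier B" and x: "x \<in> carrier A"
    let ?h = "\<lambda>(a, b). a \<otimes>\<^bsub>A\<^esub> f (b \<otimes>\<^bsub>A\<^esub> x)"
    have "lsum A (map ?h (lmul A (phi d) (u j))) = lsum A (map ?h (rmul A (phi d) (u j)))"
      by (rule AT.teq_eval[OF A _ _ _ _ u_bal[OF j d]])
         (use f x d j in \<open>auto simp: E_closed E_add E_lin A.l_distr A.r_distr A.m_assoc intro: AT.fsums_lmul AT.fsums_rmul u_fs\<close>)
    moreover have "lsum A (map ?h (lmul A (phi d) (u j))) = phi d \<otimes>\<^bsub>A\<^esub> lsum A (map ?h (u j))"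
    proof -
      have "phi d \<otimes>\<^bsub>A\<^esub> lsum A (map ?h (u j)) = lsum A (map (\<lambda>pq. phi d \<otimes>\<^bsub>A\<^esub> ?h pq) (u j))"
        by (rule A.lsum_mult_left) (use f x d j in \<open>auto simp: E_closed dest!: u_carr3\<close>)
      also have "\<dots> = lsum A (map ?h (lmul A (phi d) (u j)))"
        unfolding lmul_def by (simp add: comp_def, rule A.lsum_cong)
           (use f x d j in \<open>auto simp: E_closed A.m_assoc dest!: u_carr3\<close>)
      finally show ?thesis by simp
    qed
    moreover have "lsum A (map ?h (rmul A (phi d) (u j))) = lsum A (map (\<lambda>(p, q). p \<otimes>\<^bsub>A\<^esub> f (q \<otimes>\<^bsub>A\<^esub> (phi d \<otimes>\<^bsub>A\<^esub> x))) (u j))"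
      unfolding rmul_def by (simp add: comp_def, rule A.lsum_cong)
         (use f x d j in \<open>auto simp: E_closed A.m_assoc dest!: u_carr3\<close>)
    ultimately show "(\<lambda>x\<in>carrier A. lsum A (map (\<lambda>(p, q). p \<otimes>\<^bsub>A\<^esub> f (q \<otimes>\<^bsub>A\<^esub> x)) (u j))) (phi d \<otimes>\<^bsub>A\<^esub> x) =
        phi d \<otimes>\<^bsub>A\<^esub> (\<lambda>x\<in>carrier A. lsum A (map (\<lambda>(p, q). p \<otimes>\<^bsub>A\<^esub> f (q \<otimes>\<^bsub>A\<^esub> x)) (u j))) x"
      using x d by simp
  qed simp
qed

end


context d2ctx
begin

lemma qbB_bend: "j < m \<Longrightarrow> qbB A B phi u j \<in> bend E (op_ring A) (rho A)"
  unfolding bend_def lend_def additive_on_def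
proof (intro CollectI conjI ballI)
  assume j: "j < m"
  show "qbB A B phi u j \<in> carrier E \<rightarrow> carrier E" using qbB_closed[OF j] by blast
next
  fix f g assume j: "j < m" and f: "f \<in> carrier E" and g: "g \<in> carrier E"
  show "qbB A B phi u j (f \<oplus>\<^bsub>E\<^esub> g) = qbB A B phi u j f \<oplus>\<^bsub>E\<^esub> qbB A B phi u j g"
  proof (rule E_ext)
    show "qbB A B phi u j (f \<oplus>\<^bsub>E\<^esub> g) \<in> carrier E" by (rule qbB_closed[OF j E_add_closed[OF f g]])
    show "qbB A B phi u j f \<oplus>\<^bsub>E\<^esub> qbB A B phi u j g \<in> carrier E"
      by (rule E_add_closed[OF qbB_closed[OF j f] qbB_closed[OF j g]])
    fix x assume x: "x \<in> carrier A"
    have "lsum A (map (\<lambda>(p, q). p \<otimes>\<^bsub>A\<^esub> (f \<oplus>\<^bsub>E\<^esub> g) (q \<otimes>\<^bsub>A\<^esub> x)) (u j))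
        = lsum A (map (\<lambda>pq. (case pq of (p, q) \<Rightarrow> p \<otimes>\<^bsub>A\<^esub> f (q \<otimes>\<^bsub>A\<^esub> x)) \<oplus>\<^bsub>A\<^esub> (case pq of (p, q) \<Rightarrow> p \<otimes>\<^bsub>A\<^esub> g (q \<otimes>\<^bsub>A\<^esub> x))) (u j))"
      by (rule A.lsum_cong) (use x f g j in \<open>auto simp: E_closed A.r_distr dest!: u_carr3\<close>)
    also have "\<dots> = lsum A (map (\<lambda>(p, q). p \<otimes>\<^bsub>A\<^esub> f (q \<otimes>\<^bsub>A\<^esub> x)) (u j)) \<oplus>\<^bsub>A\<^esub> lsum A (map (\<lambda>(p, q). p \<otimes>\<^bsub>A\<^esub> g (q \<otimes>\<^bsub>A\<^esub> x)) (u j))"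
      by (rule A.lsum_map_add) (use x f g j in \<open>auto simp: E_closed dest!: u_carr3\<close>)
    finally show "qbB A B phi u j (f \<oplus>\<^bsub>E\<^esub> g) x = (qbB A B phi u j f \<oplus>\<^bsub>E\<^esub> qbB A B phi u j g) x"
      using x f g by (simp add: qbB_apply E_add_closed)
  qed
next
  fix a f assume j: "j < m" and a: "a \<in> carrier (op_ring A)" and f: "f \<in> carrier E"
  then have a': "a \<in> carrier A" by simp
  show "qbB A B phi u j (rho A a \<otimes>\<^bsub>E\<^esub> f) = rho A a \<otimes>\<^bsub>E\<^esub> qbB A B phi u j f"
  proof (rule E_ext)
    show "qbB A B phi u j (rho A a \<otimes>\<^bsub>E\<^esub> f) \<in> carrier E"
      by (rule qbB_closed[OF j E_mult_closed[OF rho_closed[OF a'] f]])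
    show "rho A a \<otimes>\<^bsub>E\<^esub> qbB A B phi u j f \<in> carrier E"
      by (rule E_mult_closed[OF rho_closed[OF a'] qbB_closed[OF j f]])
    fix x assume x: "x \<in> carrier A"
    have "lsum A (map (\<lambda>(p, q). p \<otimes>\<^bsub>A\<^esub> f (q \<otimes>\<^bsub>A\<^esub> x)) (u j)) \<otimes>\<^bsub>A\<^esub> a
        = lsum A (map (\<lambda>pq. (case pq of (p, q) \<Rightarrow> p \<otimes>\<^bsub>A\<^esub> f (q \<otimes>\<^bsub>A\<^esub> x)) \<otimes>\<^bsub>A\<^esub> a) (u j))"
      by (rule A.lsum_mult_right) (use x f j a' in \<open>auto simp: E_closed dest!: u_carr3\<close>)
    also have "\<dots> = lsum A (map (\<lambda>(p, q). p \<otimes>\<^bsub>A\<^esub> (rho A a \<otimes>\<^bsub>E\<^esub> f) (q \<otimes>\<^bsub>A\<^esub> x)) (u j))"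
      by (rule A.lsum_cong) (use x f j a' in \<open>auto simp: E_closed A.m_assoc dest!: u_carr3\<close>)
    moreover have "lsum A (map (\<lambda>(p, q). p \<otimes>\<^bsub>A\<^esub> f (q \<otimes>\<^bsub>A\<^esub> x)) (u j)) \<in> carrier A"
      using E_closed[OF qbB_closed[OF j f] x] x f by (simp add: qbB_apply)
    ultimately show "qbB A B phi u j (rho A a \<otimes>\<^bsub>E\<^esub> f) x = (rho A a \<otimes>\<^bsub>E\<^esub> qbB A B phi u j f) x"
      using x f a' by (simp add: qbB_apply E_mult_closed rho_closed)
  qed
next
  fix a f assume j: "j < m" and a: "a \<in> carrier (op_ring A)" and f: "f \<in> carrier E"
  then have a': "a \<in> carrier A" by simp
  show "qbB A B phi u j (f \<otimes>\<^bsub>E\<^esub> rho A a) = qbB A B phi u j f \<otimes>\<^bsub>E\<^esub> rho A a"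
  proof (rule E_ext)
    show "qbB A B phi u j (f \<otimes>\<^bsub>E\<^esub> rho A a) \<in> carrier E"
      by (rule qbB_closed[OF j E_mult_closed[OF f rho_closed[OF a']]])
    show "qbB A B phi u j f \<otimes>\<^bsub>E\<^esub> rho A a \<in> carrier E"
      by (rule E_mult_closed[OF qbB_closed[OF j f] rho_closed[OF a']])
    fix x assume x: "x \<in> carrier A"
    have "lsum A (map (\<lambda>(p, q). p \<otimes>\<^bsub>A\<^esub> (f \<otimes>\<^bsub>E\<^esub> rho A a) (q \<otimes>\<^bsub>A\<^esub> x)) (u j))
        = lsum A (map (\<lambda>(p, q). p \<otimes>\<^bsub>A\<^esub> f (q \<otimes>\<^bsub>A\<^esub> (x \<otimes>\<^bsub>A\<^esub> a))) (u j))"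
      by (rule A.lsum_cong) (use x f j a' in \<open>auto simp: E_closed A.m_assoc dest!: u_carr3\<close>)
    then show "qbB A B phi u j (f \<otimes>\<^bsub>E\<^esub> rho A a) x = (qbB A B phi u j f \<otimes>\<^bsub>E\<^esub> rho A a) x"
      using x f a' by (simp add: qbB_apply E_mult_closed rho_closed)
  qed
qed

lemma K_T:
  assumes jl: "j < m" "l < m" and x: "x \<in> carrier A"
    and Q: "\<And>k. k < m \<Longrightarrow> Q k \<in> carrier E" and W: "\<And>y. y \<in> carrier A \<Longrightarrow> W y \<in> carrier A"
  shows "lsum A (map (\<lambda>(F, G). F (x \<otimes>\<^bsub>A\<^esub> cc l G)) (concat (map (\<lambda>k. map (\<lambda>(p, q). (Phi j p (W q), Q k)) (u k)) [0..<m])))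
       = lsum A (map (\<lambda>k. lsum A (map (\<lambda>a. gamma j ((x \<otimes>\<^bsub>A\<^esub> cc l (Q k)) \<otimes>\<^bsub>A\<^esub> fst a) \<otimes>\<^bsub>A\<^esub> W (snd a)) (u k))) [0..<m])"
proof -
  have "map (\<lambda>(F, G). F (x \<otimes>\<^bsub>A\<^esub> cc l G)) (concat (map (\<lambda>k. map (\<lambda>(p, q). (Phi j p (W q), Q k)) (u k)) [0..<m]))
      = concat (map (\<lambda>k. map (\<lambda>(p, q). gamma j ((x \<otimes>\<^bsub>A\<^esub> cc l (Q k)) \<otimes>\<^bsub>A\<^esub> p) \<otimes>\<^bsub>A\<^esub> W q) (u k)) [0..<m])"
  proof -
    have per: "map (\<lambda>(F, G). F (x \<otimes>\<^bsub>A\<^esub> cc l G)) (map (\<lambda>(p, q). (Phi j p (W q), Q k)) (u k))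
        = map (\<lambda>(p, q). gamma j ((x \<otimes>\<^bsub>A\<^esub> cc l (Q k)) \<otimes>\<^bsub>A\<^esub> p) \<otimes>\<^bsub>A\<^esub> W q) (u k)" if k: "k < m" for k
    proof -
      have c: "x \<otimes>\<^bsub>A\<^esub> cc l (Q k) \<in> carrier A" using x cc_closedE[OF jl(2) Q[OF k]] by simp
      then show ?thesis by (simp add: split_def)
    qed
    show ?thesis unfolding map_concat map_map
      by (intro arg_cong[where f = concat] map_cong refl) (use jl x Q in \<open>auto simp: split_def cc_closedE\<close>)
  qed
  then have "lsum A (map (\<lambda>(F, G). F (x \<otimes>\<^bsub>A\<^esub> cc l G)) (concat (map (\<lambda>k. map (\<lambda>(p, q). (Phi j p (W q), Q k)) (u k)) [0..<m])))
      = lsum A (concat (map (\<lambda>k. map (\<lambda>(p, q). gamma j ((x \<otimes>\<^bsub>A\<^esub> cc l (Q k)) \<otimes>\<^bsub>A\<^esub> p) \<otimes>\<^bsub>A\<^esub> W q) (u k)) [0..<m]))"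
    by simp
  also have "\<dots> = lsum A (map (\<lambda>k. lsum A (map (\<lambda>(p, q). gamma j ((x \<otimes>\<^bsub>A\<^esub> cc l (Q k)) \<otimes>\<^bsub>A\<^esub> p) \<otimes>\<^bsub>A\<^esub> W q) (u k))) [0..<m])"
  proof (rule lsum_concat_u)
    fix k p q assume k: "k < m" and pq: "(p, q) \<in> set (u k)"
    show "gamma j ((x \<otimes>\<^bsub>A\<^esub> cc l (Q k)) \<otimes>\<^bsub>A\<^esub> p) \<otimes>\<^bsub>A\<^esub> W q \<in> carrier A"
      using u_carr2[OF k pq] x cc_closedE[OF jl(2) Q[OF k]] W gamma_closed[OF jl(1)] by simp
  qed
  also have "\<dots> = lsum A (map (\<lambda>k. lsum A (map (\<lambda>a. gamma j ((x \<otimes>\<^bsub>A\<^esub> cc l (Q k)) \<otimes>\<^bsub>A\<^esub> fst a) \<otimes>\<^bsub>A\<^esub> W (snd a)) (u k))) [0..<m])"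
    by (simp add: split_def)
  finally show ?thesis .
qed

lemma cc_comp: "l < m \<Longrightarrow> k < m \<Longrightarrow> H \<in> carrier E \<Longrightarrow>
    cc l (gam k \<otimes>\<^bsub>E\<^esub> H) = lsum A (map (\<lambda>b. fst b \<otimes>\<^bsub>A\<^esub> gamma k (H (snd b))) (u l))"
  unfolding cc_def split_def
  by (rule A.lsum_cong) (auto simp: E_closed dest!: u_carr4)

lemma cc_gam: "l < m \<Longrightarrow> cc l (gam k) = lsum A (map (\<lambda>b. fst b \<otimes>\<^bsub>A\<^esub> gamma k (snd b)) (u l))"
  unfolding cc_def split_def
  by (rule A.lsum_cong) (auto dest!: u_carr4)

end


context d2ctx
begin

lemma K_T0:
  assumes jl: "j < m" "l < m" and x: "x \<in> carrier A" and Q: "\<And>k. k < m \<Longrightarrow> Q k \<in> carrier E"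
  shows "lsum A (map (\<lambda>(F, G). F (x \<otimes>\<^bsub>A\<^esub> cc l G)) (concat (map (\<lambda>k. map (\<lambda>(p, q). (Phi j p q, Q k)) (u k)) [0..<m])))
       = lsum A (map (\<lambda>k. lsum A (map (\<lambda>a. gamma j ((x \<otimes>\<^bsub>A\<^esub> cc l (Q k)) \<otimes>\<^bsub>A\<^esub> fst a) \<otimes>\<^bsub>A\<^esub> snd a) (u k))) [0..<m])"
  using K_T[where W = "\<lambda>y. y", OF jl x Q] by simp

lemma K_T_inner:
  assumes jl: "j < m" "l < m" and x: "x \<in> carrier A"
    and Zc: "\<And>y. y \<in> carrier A \<Longrightarrow> Z y \<in> carrier A"
    and ccQ: "\<And>k. k < m \<Longrightarrow> cc l (Q k) = lsum A (map (\<lambda>b. fst b \<otimes>\<^bsub>A\<^esub> gamma k (Z (snd b))) (u l))"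
  shows "lsum A (map (\<lambda>k. lsum A (map (\<lambda>a. gamma j ((x \<otimes>\<^bsub>A\<^esub> cc l (Q k)) \<otimes>\<^bsub>A\<^esub> fst a) \<otimes>\<^bsub>A\<^esub> snd a) (u k))) [0..<m])
       = lsum A (map (\<lambda>b. gamma j (x \<otimes>\<^bsub>A\<^esub> fst b) \<otimes>\<^bsub>A\<^esub> Z (snd b)) (u l))"
proof -
  have "lsum A (map (\<lambda>k. lsum A (map (\<lambda>a. gamma j ((x \<otimes>\<^bsub>A\<^esub> cc l (Q k)) \<otimes>\<^bsub>A\<^esub> fst a) \<otimes>\<^bsub>A\<^esub> snd a) (u k))) [0..<m])
      = lsum A (map (\<lambda>k. lsum A (map (\<lambda>a. gamma j ((x \<otimes>\<^bsub>A\<^esub> lsum A (map (\<lambda>b. fst b \<otimes>\<^bsub>A\<^esub> gamma k (Z (snd b))) (u l))) \<otimes>\<^bsub>A\<^esub> fst a) \<otimes>\<^bsub>A\<^esub> snd a) (u k))) [0..<m])"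
    by (rule A.lsum_cong) (simp add: ccQ)
  also have "\<dots> = lsum A (map (\<lambda>b. gamma j (x \<otimes>\<^bsub>A\<^esub> fst b) \<otimes>\<^bsub>A\<^esub> Z (snd b)) (u l))"
    by (rule inner[OF jl x Zc])
  finally show ?thesis .
qed

lemma rho_Phi: "j < m \<Longrightarrow> p \<in> carrier A \<Longrightarrow> q \<in> carrier A \<Longrightarrow> a \<in> carrier A \<Longrightarrow>
    rho A a \<otimes>\<^bsub>E\<^esub> Phi j p q = Phi j p (q \<otimes>\<^bsub>A\<^esub> a)"
  by (rule E_ext) (simp_all add: E_mult_closed rho_closed Phi_closed gamma_closed A.m_assoc)

lemma qbT_lmul: "j < m \<Longrightarrow> a \<in> carrier A \<Longrightarrow>
    lmul E (rho A a) (qbT A m gamma u j) = concat (map (\<lambda>k. map (\<lambda>(p, q). (Phi j p (q \<otimes>\<^bsub>A\<^esub> a), gam k)) (u k)) [0..<m])"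
  unfolding lmul_def qbT_eq map_concat map_map
  by (intro arg_cong[where f = concat] map_cong refl) (auto simp: split_def rho_Phi dest!: u_carr4)

lemma qbT_rmul: "rmul E (rho A a) (qbT A m gamma u j) = concat (map (\<lambda>k. map (\<lambda>(p, q). (Phi j p q, gam k \<otimes>\<^bsub>E\<^esub> rho A a)) (u k)) [0..<m])"
  unfolding rmul_def qbT_eq map_concat map_map
  by (intro arg_cong[where f = concat] map_cong refl) (auto simp: split_def)

lemma qbT_tcent: "j < m \<Longrightarrow> qbT A m gamma u j \<in> tcent E (op_ring A) (rho A)"
  unfolding tcent_def
proof (intro CollectI conjI ballI)
  assume j: "j < m"
  show "qbT A m gamma u j \<in> fsums E" by (rule qbT_fs[OF j])
  fix a assume "a \<in> carrier (op_ring A)"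
  then have a: "a \<in> carrier A" by simp
  show "ET.TEQ (lmul E (rho A a) (qbT A m gamma u j)) (rmul E (rho A a) (qbT A m gamma u j))"
  proof (rule teq_by_K)
    show "lmul E (rho A a) (qbT A m gamma u j) \<in> fsums E"
      by (rule ET.fsums_lmul[OF rho_closed[OF a] qbT_fs[OF j]])
    show "rmul E (rho A a) (qbT A m gamma u j) \<in> fsums E"
      by (rule ET.fsums_rmul[OF rho_closed[OF a] qbT_fs[OF j]])
    fix l assume l: "l < m"
    show "K l (lmul E (rho A a) (qbT A m gamma u j)) = K l (rmul E (rho A a) (qbT A m gamma u j))"
    proof (rule K_eqI[OF l])
      show "lmul E (rho A a) (qbT A m gamma u j) \<in> fsums E"
        by (rule ET.fsums_lmul[OF rho_closed[OF a] qbT_fs[OF j]])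
      show "rmul E (rho A a) (qbT A m gamma u j) \<in> fsums E"
        by (rule ET.fsums_rmul[OF rho_closed[OF a] qbT_fs[OF j]])
      fix x assume x: "x \<in> carrier A"
      have cu: "fst b \<in> carrier A" "snd b \<in> carrier A" if "b \<in> set (u k)" "k < m" for b k
        using u_carr4[OF that] by auto
      define S where "S k b = gamma j ((x \<otimes>\<^bsub>A\<^esub> cc l (gam k)) \<otimes>\<^bsub>A\<^esub> fst b) \<otimes>\<^bsub>A\<^esub> snd b" for k b
      have Sc: "S k b \<in> carrier A" if "k < m" "b \<in> set (u k)" for k b
        unfolding S_def using cu[OF that(2,1)] x cc_closedE[OF l gam_closed[OF that(1)]] gamma_closed[OF j] by simp
      have "lsum A (map (\<lambda>(F, G). F (x \<otimes>\<^bsub>A\<^esub> cc l G)) (lmul E (rho A a) (qbT A m gamma u j)))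
          = lsum A (map (\<lambda>k. lsum A (map (\<lambda>b. gamma j ((x \<otimes>\<^bsub>A\<^esub> cc l (gam k)) \<otimes>\<^bsub>A\<^esub> fst b) \<otimes>\<^bsub>A\<^esub> (snd b \<otimes>\<^bsub>A\<^esub> a)) (u k))) [0..<m])"
        unfolding qbT_lmul[OF j a] by (rule K_T[OF j l x gam_closed]) (use a in simp_all)
      also have "\<dots> = lsum A (map (\<lambda>k. lsum A (map (\<lambda>b. S k b) (u k)) \<otimes>\<^bsub>A\<^esub> a) [0..<m])"
      proof (rule A.lsum_cong)
        fix k assume "k \<in> set [0..<m]"
        then have k: "k < m" by simp
        have "lsum A (map (\<lambda>b. S k b) (u k)) \<otimes>\<^bsub>A\<^esub> a = lsum A (map (\<lambda>b. S k b \<otimes>\<^bsub>A\<^esub> a) (u k))"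
          by (rule A.lsum_mult_right[OF a]) (use Sc k in auto)
        also have "\<dots> = lsum A (map (\<lambda>b. gamma j ((x \<otimes>\<^bsub>A\<^esub> cc l (gam k)) \<otimes>\<^bsub>A\<^esub> fst b) \<otimes>\<^bsub>A\<^esub> (snd b \<otimes>\<^bsub>A\<^esub> a)) (u k))"
          by (rule A.lsum_cong)
             (use cu k x a cc_closedE[OF l gam_closed[OF k]] gamma_closed[OF j] in \<open>simp add: S_def A.m_assoc\<close>)
        finally show "lsum A (map (\<lambda>b. gamma j ((x \<otimes>\<^bsub>A\<^esub> cc l (gam k)) \<otimes>\<^bsub>A\<^esub> fst b) \<otimes>\<^bsub>A\<^esub> (snd b \<otimes>\<^bsub>A\<^esub> a)) (u k))
            = lsum A (map (\<lambda>b. S k b) (u k)) \<otimes>\<^bsub>A\<^esub> a" by simp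
      qed
      also have "\<dots> = lsum A (map (\<lambda>k. lsum A (map (\<lambda>b. S k b) (u k))) [0..<m]) \<otimes>\<^bsub>A\<^esub> a"
        by (rule A.lsum_mult_right[OF a, symmetric]) (use Sc in \<open>auto intro!: A.lsum_map_closed\<close>)
      also have "lsum A (map (\<lambda>k. lsum A (map (\<lambda>b. S k b) (u k))) [0..<m])
          = lsum A (map (\<lambda>b. gamma j (x \<otimes>\<^bsub>A\<^esub> fst b) \<otimes>\<^bsub>A\<^esub> snd b) (u l))"
        unfolding S_def
        using K_T_inner[where Z = "\<lambda>y. y", OF j l x _ cc_gam[OF l]] by simp
      also have "lsum A (map (\<lambda>b. gamma j (x \<otimes>\<^bsub>A\<^esub> fst b) \<otimes>\<^bsub>A\<^esub> snd b) (u l)) \<otimes>\<^bsub>A\<^esub> a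
          = lsum A (map (\<lambda>b. gamma j (x \<otimes>\<^bsub>A\<^esub> fst b) \<otimes>\<^bsub>A\<^esub> snd b \<otimes>\<^bsub>A\<^esub> a) (u l))"
        by (rule A.lsum_mult_right[OF a]) (use cu l x gamma_closed[OF j] in auto)
      also have "\<dots> = lsum A (map (\<lambda>b. gamma j (x \<otimes>\<^bsub>A\<^esub> fst b) \<otimes>\<^bsub>A\<^esub> (snd b \<otimes>\<^bsub>A\<^esub> a)) (u l))"
        by (rule A.lsum_cong) (use cu l x a gamma_closed[OF j] in \<open>simp add: A.m_assoc\<close>)
      also have "\<dots> = lsum A (map (\<lambda>k. lsum A (map (\<lambda>b. gamma j ((x \<otimes>\<^bsub>A\<^esub> cc l (gam k \<otimes>\<^bsub>E\<^esub> rho A a)) \<otimes>\<^bsub>A\<^esub> fst b) \<otimes>\<^bsub>A\<^esub> snd b) (u k))) [0..<m])"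
      proof (rule K_T_inner[where Z = "\<lambda>y. y \<otimes>\<^bsub>A\<^esub> a", OF j l x, symmetric])
        show "\<And>y. y \<in> carrier A \<Longrightarrow> y \<otimes>\<^bsub>A\<^esub> a \<in> carrier A" using a by simp
        fix k assume k: "k < m"
        show "cc l (gam k \<otimes>\<^bsub>E\<^esub> rho A a) = lsum A (map (\<lambda>b. fst b \<otimes>\<^bsub>A\<^esub> gamma k (snd b \<otimes>\<^bsub>A\<^esub> a)) (u l))"
          unfolding cc_comp[OF l k rho_closed[OF a]]
          by (rule A.lsum_cong) (use cu l in simp)
      qed
      also have "\<dots> = lsum A (map (\<lambda>(F, G). F (x \<otimes>\<^bsub>A\<^esub> cc l G)) (rmul E (rho A a) (qbT A m gamma u j)))"
        unfolding qbT_rmul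
        by (rule K_T0[OF j l x, symmetric]) (use a in \<open>auto intro: E_mult_closed gam_closed rho_closed\<close>)
      finally show "lsum A (map (\<lambda>(F, G). F (x \<otimes>\<^bsub>A\<^esub> cc l G)) (lmul E (rho A a) (qbT A m gamma u j)))
          = lsum A (map (\<lambda>(F, G). F (x \<otimes>\<^bsub>A\<^esub> cc l G)) (rmul E (rho A a) (qbT A m gamma u j)))" .
    qed
  qed
qed

end


context d2ctx
begin

lemma qb_main:
  assumes f: "f \<in> carrier E" and g: "g \<in> carrier E"
  shows "ET.TEQ [(f, g)] (concat (map (\<lambda>j. map (\<lambda>(P, Q). (P, Q \<otimes>\<^bsub>E\<^esub> qbB A B phi u j f \<otimes>\<^bsub>E\<^esub> g)) (qbT A m gamma u j)) [0..<m]))"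
proof -
  define Qj where "Qj j k = gam k \<otimes>\<^bsub>E\<^esub> qbB A B phi u j f \<otimes>\<^bsub>E\<^esub> g" for j k
  define Rj where "Rj j = concat (map (\<lambda>k. map (\<lambda>(p, q). (Phi j p q, Qj j k)) (u k)) [0..<m])" for j
  have Qc: "Qj j k \<in> carrier E" if "j < m" "k < m" for j k
    unfolding Qj_def using that f g by (intro E_mult_closed gam_closed qbB_closed) auto
  have R: "concat (map (\<lambda>j. map (\<lambda>(P, Q). (P, Q \<otimes>\<^bsub>E\<^esub> qbB A B phi u j f \<otimes>\<^bsub>E\<^esub> g)) (qbT A m gamma u j)) [0..<m])
      = concat (map Rj [0..<m])"
    unfolding Rj_def Qj_def qbT_eq map_concat map_map
    by (intro arg_cong[where f = concat] map_cong refl) (auto simp: split_def)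
  have Rj_fs: "Rj j \<in> fsums E" if j: "j < m" for j
    unfolding Rj_def fsums_def using j Qc by (auto simp: Phi_closed dest!: u_carr3)
  have R_fs: "concat (map Rj [0..<m]) \<in> fsums E" using Rj_fs by auto
  have fg_fs: "[(f, g)] \<in> fsums E" using f g by simp
  show ?thesis unfolding R
  proof (rule teq_by_K[OF fg_fs R_fs])
    fix l assume l: "l < m"
    show "K l [(f, g)] = K l (concat (map Rj [0..<m]))"
    proof (rule K_eqI[OF l fg_fs R_fs])
      fix x assume x: "x \<in> carrier A"
      have cu: "fst b \<in> carrier A" "snd b \<in> carrier A" if "b \<in> set (u k)" "k < m" for b k
        using u_carr4[OF that] by auto
      have gc: "g (snd b) \<in> carrier A" if "b \<in> set (u l)" for b using cu[OF that l] g by (simp add: E_closed)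
      have hc: "\<And>p. p \<in> set xs \<Longrightarrow> (case p of (F, G) \<Rightarrow> F (x \<otimes>\<^bsub>A\<^esub> cc l G)) \<in> carrier A" if "xs \<in> fsums E" for xs
        using that x l by (auto simp: fsums_def E_closed cc_closedE)
      have "lsum A (map (\<lambda>(F, G). F (x \<otimes>\<^bsub>A\<^esub> cc l G)) (concat (map Rj [0..<m])))
          = lsum A (map (\<lambda>j. lsum A (map (\<lambda>(F, G). F (x \<otimes>\<^bsub>A\<^esub> cc l G)) (Rj j))) [0..<m])"
        unfolding map_concat
        by (subst A.lsum_concat) (auto simp: comp_def dest: hc[OF Rj_fs])
      also have "\<dots> = lsum A (map (\<lambda>j. lsum A (map (\<lambda>b. gamma j (x \<otimes>\<^bsub>A\<^esub> fst b) \<otimes>\<^bsub>A\<^esub> qbB A B phi u j f (g (snd b))) (u l))) [0..<m])"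
      proof (rule A.lsum_cong)
        fix j assume "j \<in> set [0..<m]"
        then have j: "j < m" by simp
        have "lsum A (map (\<lambda>(F, G). F (x \<otimes>\<^bsub>A\<^esub> cc l G)) (Rj j))
            = lsum A (map (\<lambda>k. lsum A (map (\<lambda>a. gamma j ((x \<otimes>\<^bsub>A\<^esub> cc l (Qj j k)) \<otimes>\<^bsub>A\<^esub> fst a) \<otimes>\<^bsub>A\<^esub> snd a) (u k))) [0..<m])"
          unfolding Rj_def by (rule K_T0[OF j l x Qc[OF j]])
        also have "\<dots> = lsum A (map (\<lambda>b. gamma j (x \<otimes>\<^bsub>A\<^esub> fst b) \<otimes>\<^bsub>A\<^esub> qbB A B phi u j f (g (snd b))) (u l))"
        proof (rule K_T_inner[where Z = "\<lambda>y. qbB A B phi u j f (g y)", OF j l x])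
          show "\<And>y. y \<in> carrier A \<Longrightarrow> qbB A B phi u j f (g y) \<in> carrier A"
            using qbB_closed[OF j f] g by (simp add: E_closed)
          fix k assume k: "k < m"
          have "Qj j k = gam k \<otimes>\<^bsub>E\<^esub> (qbB A B phi u j f \<otimes>\<^bsub>E\<^esub> g)"
            unfolding Qj_def using gam_closed[OF k] qbB_closed[OF j f] g by (simp add: E.m_assoc)
          then show "cc l (Qj j k) = lsum A (map (\<lambda>b. fst b \<otimes>\<^bsub>A\<^esub> gamma k (qbB A B phi u j f (g (snd b)))) (u l))"
            using cc_comp[OF l k E_mult_closed[OF qbB_closed[OF j f] g]]
            by simp (rule A.lsum_cong, use cu l in simp)
        qed
        finally show "lsum A (map (\<lambda>(F, G). F (x \<otimes>\<^bsub>A\<^esub> cc l G)) (Rj j))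
            = lsum A (map (\<lambda>b. gamma j (x \<otimes>\<^bsub>A\<^esub> fst b) \<otimes>\<^bsub>A\<^esub> qbB A B phi u j f (g (snd b))) (u l))" .
      qed
      also have "\<dots> = lsum A (map (\<lambda>b. lsum A (map (\<lambda>j. gamma j (x \<otimes>\<^bsub>A\<^esub> fst b) \<otimes>\<^bsub>A\<^esub> qbB A B phi u j f (g (snd b))) [0..<m])) (u l))"
        by (rule A.lsum_swap)
           (use cu l x gc qbB_closed f gamma_closed in \<open>auto simp: E_closed\<close>)
      also have "\<dots> = lsum A (map (\<lambda>b. f ((x \<otimes>\<^bsub>A\<^esub> fst b) \<otimes>\<^bsub>A\<^esub> g (snd b))) (u l))"
      proof (rule A.lsum_cong)
        fix b assume b: "b \<in> set (u l)"
        have "lsum A (map (\<lambda>j. gamma j (x \<otimes>\<^bsub>A\<^esub> fst b) \<otimes>\<^bsub>A\<^esub> qbB A B phi u j f (g (snd b))) [0..<m])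
            = lsum A (map (\<lambda>j. gamma j (x \<otimes>\<^bsub>A\<^esub> fst b) \<otimes>\<^bsub>A\<^esub> lsum A (map (\<lambda>(r, s). r \<otimes>\<^bsub>A\<^esub> f (s \<otimes>\<^bsub>A\<^esub> g (snd b))) (u j))) [0..<m])"
          by (rule A.lsum_cong) (use f gc[OF b] in \<open>simp add: qbB_apply\<close>)
        also have "\<dots> = f ((x \<otimes>\<^bsub>A\<^esub> fst b) \<otimes>\<^bsub>A\<^esub> g (snd b))"
          by (rule I2[OF f]) (use x cu[OF b l] gc[OF b] in simp_all)
        finally show "lsum A (map (\<lambda>j. gamma j (x \<otimes>\<^bsub>A\<^esub> fst b) \<otimes>\<^bsub>A\<^esub> qbB A B phi u j f (g (snd b))) [0..<m])
            = f ((x \<otimes>\<^bsub>A\<^esub> fst b) \<otimes>\<^bsub>A\<^esub> g (snd b))" .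
      qed
      also have "\<dots> = f (lsum A (map (\<lambda>b. (x \<otimes>\<^bsub>A\<^esub> fst b) \<otimes>\<^bsub>A\<^esub> g (snd b)) (u l)))"
        by (rule A.additive_lsum[OF E_fun[OF f] E_additive[OF f], symmetric])
           (use x cu l gc in auto)
      also have "lsum A (map (\<lambda>b. (x \<otimes>\<^bsub>A\<^esub> fst b) \<otimes>\<^bsub>A\<^esub> g (snd b)) (u l)) = x \<otimes>\<^bsub>A\<^esub> cc l g"
      proof -
        have "x \<otimes>\<^bsub>A\<^esub> cc l g = lsum A (map (\<lambda>b. x \<otimes>\<^bsub>A\<^esub> (fst b \<otimes>\<^bsub>A\<^esub> g (snd b))) (u l))"
          unfolding cc_def split_def by (rule A.lsum_mult_left[OF x]) (use cu l gc in auto)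
        also have "\<dots> = lsum A (map (\<lambda>b. (x \<otimes>\<^bsub>A\<^esub> fst b) \<otimes>\<^bsub>A\<^esub> g (snd b)) (u l))"
          by (rule A.lsum_cong) (use x cu l gc in \<open>simp add: A.m_assoc\<close>)
        finally show ?thesis by simp
      qed
      also have "f (x \<otimes>\<^bsub>A\<^esub> cc l g) = lsum A (map (\<lambda>(F, G). F (x \<otimes>\<^bsub>A\<^esub> cc l G)) [(f, g)])"
        using f x cc_closedE[OF l g] by (simp add: E_closed)
      finally show "lsum A (map (\<lambda>(F, G). F (x \<otimes>\<^bsub>A\<^esub> cc l G)) [(f, g)])
          = lsum A (map (\<lambda>(F, G). F (x \<otimes>\<^bsub>A\<^esub> cc l G)) (concat (map Rj [0..<m])))" by simp
    qed
  qed
qed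

lemma left_qb: "left_D2_qb E (op_ring A) (rho A) m (qbB A B phi u) (qbT A m gamma u)"
  unfolding left_D2_qb_def using qbB_bend qbT_tcent qb_main by blast

end

lemma hom_fun: "phi \<in> ring_hom B A \<Longrightarrow> phi \<in> carrier B \<rightarrow> carrier A"
  by (auto simp: ring_hom_def)

theorem corollary5p2:
  fixes A :: "'a ring" and B :: "'b ring" and phi :: "'b \<Rightarrow> 'a"
  assumes "ring A" and "ring B" and "phi \<in> ring_hom B A"
    and "right_D2 A B phi"
  shows "left_D2 (End_ring A B phi) (op_ring A) (rho A) \<and>
         left_balanced (End_ring A B phi) (op_ring A) (rho A) \<and>
         (\<forall>m gamma u. right_D2_qb A B phi m gamma u \<longrightarrow>
           left_D2_qb (End_ring A B phi) (op_ring A) (rho A) m (qbB A B phi u) (qbT A m gamma u))"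
proof -
  have phiB: "phi \<in> carrier B \<rightarrow> carrier A" by (rule hom_fun[OF assms(3)])
  interpret ec: ectx A B phi by (rule ectx.intro[OF assms(1) phiB])
  interpret tA: tctx A B phi by (rule tctx.intro[OF assms(1) phiB])
  have L3: "left_D2_qb (End_ring A B phi) (op_ring A) (rho A) m (qbB A B phi u) (qbT A m gamma u)"
    if q: "right_D2_qb A B phi m gamma u" for m gamma u
  proof -
    interpret d: d2ctx A B phi m gamma u
      by (rule d2ctx.intro[OF ectx.intro[OF assms(1) phiB] d2ctx_axioms.intro[OF q]])
    show ?thesis by (rule d.left_qb)
  qed
  obtain m gamma u where q: "right_D2_qb A B phi m gamma u"
    using tA.right_D2_qb_exists[OF assms(4)] by blast
  have L1: "left_D2 (End_ring A B phi) (op_ring A) (rho A)"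
    by (rule tctx.qb_left_D2[OF tctx.intro[OF ec.E_ring] L3[OF q]]) (auto intro: ec.rho_closed)
  show ?thesis using L1 ec.left_bal L3 by blast
qed


end
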